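(* Let $G\le\operatorname{Homeo}(\mathfrak{C})$ be vigorous and approximately full. Let $C\in K_{\mathfrak{C}}$ and let $\Gamma\subseteq G$ be finite such that for $\gamma_1,\gamma_2\in\Gamma$, $C\gamma_1\cap C\gamma_2\neq\varnothing$ implies $\gamma_1=\gamma_2$. Let $g$ be a permutation of $\Gamma$, and let $\delta\in\operatorname{Homeo}(\mathfrak{C})$ be such that $\operatorname{supp}(\delta)\subseteq\bigcup_{\gamma\in\Gamma}C\gamma$ and, for each $\gamma\in\Gamma$, $\delta$ agrees with $\gamma^{-1}(\gamma g)$ on $C\gamma$ (i.e. $p\delta=(p\gamma^{-1})(\gamma g)$ for $p\in C\gamma$). If $O_G(C)$ is an even element of $(\mathcal{O}(G),+)$ or $g$ is an even permutation, then $\delta\in G$.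
   Context: $\mathfrak{C}$ denotes a Cantor space (a space homeomorphic to $\{0,1\}^\omega$). Groups of homeomorphisms act on the right, products composed left to right. $K_{\mathfrak{C}}$ denotes the set of non-empty proper clopen subsets of $\mathfrak{C}$. For $\gamma\in\operatorname{Homeo}(\mathfrak{C})$, $\operatorname{supp}(\gamma)=\{p\in\mathfrak{C}: p\gamma\neq p\}$. A subset $S\subseteq \operatorname{Homeo}(\mathfrak{C})$ is vigorous if for all clopen $A,B,C\subseteq\mathfrak{C}$ with $B,C$ non-empty proper subsets of $A$ there is $\gamma\in S$ with $\operatorname{supp}(\gamma)\subseteq A$ and $B\gamma\subseteq C$. $G$ is approximately full if whenever $\Gamma\subseteq G$ is finite, $\{D_\gamma\}_{\gamma\in\Gamma}$ is a partition of $\mathfrak{C}$ into clopen sets such that $\{D_\gamma\gamma\}_{\gamma\in\Gamma}$ is also a partition of $\mathfrak{C}$, and $\delta\in\Gamma$, there exists $\chi\in G$ with $\chi|_{D_\gamma}=\gamma|_{D_\gamma}$ for every $\gamma\in\Gamma\setminus\{\delta\}$. For $B\in K_{\mathfrak{C}}$, $O_G(B):=\{B\gamma:\gamma\in G\}$, and $\mathcal{O}(G):=\{O_G(B): B\in K_{\mathfrak{C}}\}$; it is an abelian group under $O_G(U)+O_G(V):=O_G(U\mu\cup V\nu)$, where $\mu,\nu\in G$ are any elements with $U\mu\cap V\nu=\varnothing$ and $U\mu\cup V\nu\neq\mathfrak{C}$. An element $x\in\mathcal{O}(G)$ is even if $x=y+y$ for some $y\in\mathcal{O}(G)$. *)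

theory Defs
  imports "HOL-Analysis.Analysis" "HOL-Combinatorics.Permutations"
begin

definition cantor_space :: "'a topology \<Rightarrow> bool" where
  "cantor_space X \<longleftrightarrow>
     X homeomorphic_space product_topology (\<lambda>_::nat. discrete_topology (UNIV::bool set)) UNIV"

text \<open>Homeomorphisms of X, represented as functions that are the identity outside the
  carrier (so that they are genuine bijections of the whole type).  Application
  "p gamma" of the paper is the function application "gamma p"; the paper's product
  "alpha beta" (first alpha, then beta) is "beta o alpha"; inverses are "inv".\<close>
definition Homeo :: "'a topology \<Rightarrow> ('a \<Rightarrow> 'a) set" where
  "Homeo X = {f. homeomorphic_map X X f \<and> (\<forall>x. x \<notin> topspace X \<longrightarrow> f x = x)}"

definition subgroup_Homeo :: "'a topology \<Rightarrow> ('a \<Rightarrow> 'a) set \<Rightarrow> bool" where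
  "subgroup_Homeo X G \<longleftrightarrow> G \<subseteq> Homeo X \<and> id \<in> G \<and>
     (\<forall>f\<in>G. \<forall>h\<in>G. h \<circ> f \<in> G) \<and> (\<forall>f\<in>G. inv f \<in> G)"

definition clopen_in :: "'a topology \<Rightarrow> 'a set \<Rightarrow> bool" where
  "clopen_in X A \<longleftrightarrow> openin X A \<and> closedin X A"

definition Kset :: "'a topology \<Rightarrow> 'a set set" where
  "Kset X = {A. clopen_in X A \<and> A \<noteq> {} \<and> A \<noteq> topspace X}"

definition supp :: "'a topology \<Rightarrow> ('a \<Rightarrow> 'a) \<Rightarrow> 'a set" where
  "supp X f = {p \<in> topspace X. f p \<noteq> p}"

definition vigorous :: "'a topology \<Rightarrow> ('a \<Rightarrow> 'a) set \<Rightarrow> bool" where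
  "vigorous X S \<longleftrightarrow>
     (\<forall>A B C. clopen_in X A \<and> clopen_in X B \<and> clopen_in X C \<and>
        B \<noteq> {} \<and> C \<noteq> {} \<and> B \<subset> A \<and> C \<subset> A \<longrightarrow>
        (\<exists>\<gamma>\<in>S. supp X \<gamma> \<subseteq> A \<and> \<gamma> ` B \<subseteq> C))"

definition clopen_partition :: "'a topology \<Rightarrow> 'i set \<Rightarrow> ('i \<Rightarrow> 'a set) \<Rightarrow> bool" where
  "clopen_partition X I D \<longleftrightarrow>
     (\<forall>i\<in>I. clopen_in X (D i) \<and> D i \<noteq> {}) \<and>
     (\<forall>i\<in>I. \<forall>j\<in>I. i \<noteq> j \<longrightarrow> D i \<inter> D j = {}) \<and>
     (\<Union>i\<in>I. D i) = topspace X"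

definition approx_full :: "'a topology \<Rightarrow> ('a \<Rightarrow> 'a) set \<Rightarrow> bool" where
  "approx_full X G \<longleftrightarrow>
     (\<forall>\<Gamma> D \<delta>. finite \<Gamma> \<and> \<Gamma> \<subseteq> G \<and> clopen_partition X \<Gamma> D \<and>
        clopen_partition X \<Gamma> (\<lambda>\<gamma>. \<gamma> ` D \<gamma>) \<and> \<delta> \<in> \<Gamma> \<longrightarrow>
        (\<exists>ch\<in>G. \<forall>\<gamma>\<in>\<Gamma> - {\<delta>}. \<forall>p\<in>D \<gamma>. ch p = \<gamma> p))"

definition orbitG :: "('a \<Rightarrow> 'a) set \<Rightarrow> 'a set \<Rightarrow> 'a set set" where
  "orbitG G B = {\<gamma> ` B | \<gamma>. \<gamma> \<in> G}"

definition orbits :: "'a topology \<Rightarrow> ('a \<Rightarrow> 'a) set \<Rightarrow> 'a set set set" where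
  "orbits X G = {orbitG G B | B. B \<in> Kset X}"

definition orbit_add :: "'a topology \<Rightarrow> ('a \<Rightarrow> 'a) set \<Rightarrow> 'a set set \<Rightarrow> 'a set set \<Rightarrow> 'a set set" where
  "orbit_add X G x y = (SOME z. \<exists>U V \<mu> \<nu>. U \<in> Kset X \<and> V \<in> Kset X \<and> \<mu> \<in> G \<and> \<nu> \<in> G \<and>
      x = orbitG G U \<and> y = orbitG G V \<and> \<mu> ` U \<inter> \<nu> ` V = {} \<and>
      \<mu> ` U \<union> \<nu> ` V \<noteq> topspace X \<and> z = orbitG G (\<mu> ` U \<union> \<nu> ` V))"

definition even_orbit :: "'a topology \<Rightarrow> ('a \<Rightarrow> 'a) set \<Rightarrow> 'a set set \<Rightarrow> bool" where
  "even_orbit X G x \<longleftrightarrow> (\<exists>y\<in>orbits X G. x = orbit_add X G y y)"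

end

theory Submission
  imports Defs
begin


lemma G_facts:
  assumes "subgroup_Homeo X G" "f \<in> G"
  shows "bij f" "\<And>p. p \<notin> topspace X \<Longrightarrow> f p = p" "f ` topspace X = topspace X"
    "homeomorphic_map X X f" "inv f \<in> G"
proof -
  have h: "homeomorphic_map X X f" and o: "\<And>p. p \<notin> topspace X \<Longrightarrow> f p = p"
    using assms unfolding subgroup_Homeo_def Homeo_def by auto
  show "homeomorphic_map X X f" by fact
  show "\<And>p. p \<notin> topspace X \<Longrightarrow> f p = p" by fact
  show s: "f ` topspace X = topspace X" using homeomorphic_imp_surjective_map[OF h] .
  have i: "inj_on f (topspace X)" using homeomorphic_imp_injective_map[OF h] .
  show "inv f \<in> G" using assms unfolding subgroup_Homeo_def by auto
  show "bij f"
    unfolding bij_def inj_def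
  proof (intro conjI allI impI)
    fix x y assume "f x = f y"
    then show "x = y" using i s o
      by (metis image_eqI inj_onD)
  next
    show "surj f"
    proof -
      { fix y have "y \<in> range f"
        proof (cases "y \<in> topspace X")
          case True then show ?thesis using s by auto
        next
          case False then show ?thesis using o by (metis rangeI)
        qed }
      then show ?thesis by auto
    qed
  qed
qed

lemma G_comp: "subgroup_Homeo X G \<Longrightarrow> f \<in> G \<Longrightarrow> h \<in> G \<Longrightarrow> h \<circ> f \<in> G"
  unfolding subgroup_Homeo_def by auto

lemma G_id: "subgroup_Homeo X G \<Longrightarrow> id \<in> G"
  unfolding subgroup_Homeo_def by auto

lemma G_clopen:
  assumes "subgroup_Homeo X G" "f \<in> G" "clopen_in X A"
  shows "clopen_in X (f ` A)"
proof -
  have h: "homeomorphic_map X X f" using G_facts[OF assms(1,2)] by auto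
  have "A \<subseteq> topspace X" using assms(3) unfolding clopen_in_def by (simp add: openin_subset)
  then show ?thesis using assms(3) homeomorphic_map_openness[OF h] homeomorphic_map_closedness[OF h]
    unfolding clopen_in_def by auto
qed

lemma clopen_sub: "clopen_in X A \<Longrightarrow> A \<subseteq> topspace X"
  unfolding clopen_in_def by (simp add: openin_subset)

lemma clopen_Int: "clopen_in X A \<Longrightarrow> clopen_in X B \<Longrightarrow> clopen_in X (A \<inter> B)"
  unfolding clopen_in_def by auto

lemma clopen_Un: "clopen_in X A \<Longrightarrow> clopen_in X B \<Longrightarrow> clopen_in X (A \<union> B)"
  unfolding clopen_in_def by auto

lemma clopen_diff: "clopen_in X A \<Longrightarrow> clopen_in X B \<Longrightarrow> clopen_in X (A - B)"
  unfolding clopen_in_def by (auto intro: openin_diff closedin_diff)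

lemma clopen_top: "clopen_in X (topspace X)"
  unfolding clopen_in_def by auto

lemma clopen_Union_fin: "finite F \<Longrightarrow> (\<forall>A\<in>F. clopen_in X A) \<Longrightarrow> clopen_in X (\<Union>F)"
  unfolding clopen_in_def by (auto intro: closedin_Union)


lemma no_open_singleton:
  "\<not> openin (product_topology (\<lambda>_::nat. discrete_topology (UNIV::bool set)) UNIV) {x}"
proof
  assume "openin (product_topology (\<lambda>_::nat. discrete_topology (UNIV::bool set)) UNIV) {x}"
  then obtain U where fin: "finite {i. U i \<noteq> UNIV}" and xin: "x \<in> Pi\<^sub>E UNIV U"
      and sub: "Pi\<^sub>E UNIV U \<subseteq> {x}"
    unfolding openin_product_topology_alt by auto
  obtain n where n: "n \<notin> {i. U i \<noteq> UNIV}"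
    using fin infinite_UNIV_nat by (metis ex_new_if_finite)
  have "x(n := \<not> x n) \<in> Pi\<^sub>E UNIV U" using xin n by (auto simp: PiE_def Pi_def)
  then have "x(n := \<not> x n) = x" using sub by auto
  then show False by (metis fun_upd_same)
qed

lemma cantor_split:
  assumes "cantor_space X" "clopen_in X C" "C \<noteq> {}"
  shows "\<exists>C1 C2. clopen_in X C1 \<and> clopen_in X C2 \<and> C1 \<noteq> {} \<and> C2 \<noteq> {} \<and> C1 \<inter> C2 = {} \<and> C1 \<union> C2 = C"
proof -
  let ?Y = "product_topology (\<lambda>_::nat. discrete_topology (UNIV::bool set)) UNIV"
  obtain \<phi> where hom: "homeomorphic_map X ?Y \<phi>"
    using assms(1) unfolding cantor_space_def homeomorphic_space by blast
  obtain p where p: "p \<in> C" using assms(3) by blast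
  have CT: "C \<subseteq> topspace X" using clopen_sub[OF assms(2)] .
  have "\<exists>q\<in>C. q \<noteq> p"
  proof (rule ccontr)
    assume nq: "\<not> (\<exists>q\<in>C. q \<noteq> p)"
    then have "C = {p}" using p by blast
    then have "openin X {p}" using assms(2) unfolding clopen_in_def by simp
    moreover have "{p} \<subseteq> topspace X" using CT p by blast
    ultimately have "openin ?Y (\<phi> ` {p})" using homeomorphic_map_openness[OF hom, of "{p}"] by blast
    then show False using no_open_singleton by simp
  qed
  then obtain q where q: "q \<in> C" "q \<noteq> p" by blast
  have "\<phi> p \<noteq> \<phi> q" using inj_onD[OF homeomorphic_imp_injective_map[OF hom], of p q] CT p q by blast
  then obtain n where n: "\<phi> p n \<noteq> \<phi> q n" using ext[of "\<phi> p" "\<phi> q"] by blast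
  have cm0: "continuous_map X (discrete_topology (UNIV::bool set)) ((\<lambda>x. x n) \<circ> \<phi>)"
    using continuous_map_compose[OF homeomorphic_imp_continuous_map[OF hom]
        continuous_map_product_projection[of n UNIV "\<lambda>_. discrete_topology UNIV"]] by simp
  have cm: "continuous_map X (discrete_topology (UNIV::bool set)) (\<lambda>x. \<phi> x n)"
    using cm0 unfolding comp_def .
  define S where "S = {x \<in> topspace X. \<phi> x n \<in> {\<phi> p n}}"
  have "openin X S" unfolding S_def by (rule openin_continuous_map_preimage[OF cm]) simp
  moreover have "closedin X S" unfolding S_def by (rule closedin_continuous_map_preimage[OF cm]) simp
  ultimately have cS: "clopen_in X S" unfolding clopen_in_def by blast
  have "p \<in> C \<inter> S" using p CT unfolding S_def by blast
  moreover have "q \<in> C - S" using q CT n unfolding S_def by simp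
  ultimately show ?thesis
    using clopen_Int[OF assms(2) cS] clopen_diff[OF assms(2) cS] by blast
qed
lemma nontrivial_in:
  assumes "cantor_space X" "subgroup_Homeo X G" "vigorous X G" "clopen_in X W" "W \<noteq> {}"
  shows "\<exists>\<omega>\<in>G. (\<forall>p. p \<notin> W \<longrightarrow> \<omega> p = p) \<and> (\<exists>p\<in>W. \<omega> p \<noteq> p)"
proof -
  obtain W1 W2 where w: "clopen_in X W1" "clopen_in X W2" "W1 \<noteq> {}" "W2 \<noteq> {}" "W1 \<inter> W2 = {}" "W1 \<union> W2 = W"
    using cantor_split[OF assms(1,4,5)] by blast
  have s1: "W1 \<subset> W" using w by blast
  have s2: "W2 \<subset> W" using w by blast
  have "\<exists>\<gamma>\<in>G. supp X \<gamma> \<subseteq> W \<and> \<gamma> ` W1 \<subseteq> W2"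
  proof -
    have "clopen_in X W \<and> clopen_in X W1 \<and> clopen_in X W2 \<and> W1 \<noteq> {} \<and> W2 \<noteq> {} \<and> W1 \<subset> W \<and> W2 \<subset> W"
      using w(1-4) assms(4) s1 s2 by (intro conjI)
    then show ?thesis
      using assms(3)[unfolded vigorous_def, THEN spec[where x=W], THEN spec[where x=W1], THEN spec[where x=W2]]
      by (rule rev_mp)
  qed
  then obtain \<omega> where om: "\<omega> \<in> G" "supp X \<omega> \<subseteq> W" "\<omega> ` W1 \<subseteq> W2" by blast
  have o1: "\<forall>p. p \<notin> W \<longrightarrow> \<omega> p = p"
  proof (intro allI impI)
    fix p assume pW: "p \<notin> W"
    show "\<omega> p = p"
    proof (cases "p \<in> topspace X")
      case True then show ?thesis using pW om(2) unfolding supp_def by blast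
    next
      case False then show ?thesis using G_facts(2)[OF assms(2) om(1)] by blast
    qed
  qed
  obtain p where p: "p \<in> W1" using w(3) by blast
  have "\<omega> p \<in> W2" using om(3) p by blast
  then have "\<omega> p \<noteq> p" using p disjoint_iff[THEN iffD1, OF w(5)] by metis
  moreover have "p \<in> W" using p w(6) by blast
  ultimately show ?thesis using om(1) o1 by blast
qed


definition DJ :: "('a \<Rightarrow> 'a) set \<Rightarrow> 'a set \<Rightarrow> bool" where
  "DJ \<Gamma> P \<longleftrightarrow> (\<forall>\<gamma>1\<in>\<Gamma>. \<forall>\<gamma>2\<in>\<Gamma>. \<gamma>1 ` P \<inter> \<gamma>2 ` P \<noteq> {} \<longrightarrow> \<gamma>1 = \<gamma>2)"

definition cp :: "('a \<Rightarrow> 'a) set \<Rightarrow> 'a set \<Rightarrow> 'a \<Rightarrow> ('a \<Rightarrow> 'a)" where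
  "cp \<Gamma> P p = (SOME \<gamma>. \<gamma> \<in> \<Gamma> \<and> p \<in> \<gamma> ` P)"

definition Phi :: "('a \<Rightarrow> 'a) set \<Rightarrow> 'a set \<Rightarrow> (('a \<Rightarrow> 'a) \<Rightarrow> ('a \<Rightarrow> 'a)) \<Rightarrow> 'a \<Rightarrow> 'a" where
  "Phi \<Gamma> P \<sigma> p = (if \<exists>\<gamma>\<in>\<Gamma>. p \<in> \<gamma> ` P then \<sigma> (cp \<Gamma> P p) (inv (cp \<Gamma> P p) p) else p)"

lemma DJ_D: "DJ \<Gamma> P \<Longrightarrow> \<gamma>1 \<in> \<Gamma> \<Longrightarrow> \<gamma>2 \<in> \<Gamma> \<Longrightarrow> p \<in> \<gamma>1 ` P \<Longrightarrow> p \<in> \<gamma>2 ` P \<Longrightarrow> \<gamma>1 = \<gamma>2"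
  unfolding DJ_def by blast

lemma cp_eq:
  assumes "DJ \<Gamma> P" "\<gamma> \<in> \<Gamma>" "p \<in> \<gamma> ` P"
  shows "cp \<Gamma> P p = \<gamma>"
proof -
  have ex: "\<exists>\<gamma>. \<gamma> \<in> \<Gamma> \<and> p \<in> \<gamma> ` P" using assms(2,3) by blast
  have "cp \<Gamma> P p \<in> \<Gamma> \<and> p \<in> cp \<Gamma> P p ` P"
    unfolding cp_def by (rule someI_ex[OF ex])
  then show ?thesis using DJ_D[OF assms(1) _ assms(2) _ assms(3)] by blast
qed

lemma Phi_in:
  assumes "DJ \<Gamma> P" "\<gamma> \<in> \<Gamma>" "p \<in> \<gamma> ` P"
  shows "Phi \<Gamma> P \<sigma> p = \<sigma> \<gamma> (inv \<gamma> p)"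
proof -
  have "\<exists>\<gamma>\<in>\<Gamma>. p \<in> \<gamma> ` P" using assms(2,3) by blast
  then show ?thesis unfolding Phi_def cp_eq[OF assms] by (rule if_P)
qed

lemma Phi_in2:
  assumes "DJ \<Gamma> P" "\<gamma> \<in> \<Gamma>" "x \<in> P" "inj \<gamma>"
  shows "Phi \<Gamma> P \<sigma> (\<gamma> x) = \<sigma> \<gamma> x"
  using Phi_in[OF assms(1,2), of "\<gamma> x" \<sigma>] assms(3,4) by (simp add: inv_f_f)

lemma Phi_out:
  assumes "\<not> (\<exists>\<gamma>\<in>\<Gamma>. p \<in> \<gamma> ` P)"
  shows "Phi \<Gamma> P \<sigma> p = p"
  unfolding Phi_def using assms by (rule if_not_P)

lemma Phi_comp:
  assumes dj: "DJ \<Gamma> P" and inj: "\<forall>\<gamma>\<in>\<Gamma>. inj \<gamma>" and s: "\<forall>\<gamma>\<in>\<Gamma>. \<sigma> \<gamma> \<in> \<Gamma>"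
  shows "Phi \<Gamma> P \<tau> \<circ> Phi \<Gamma> P \<sigma> = Phi \<Gamma> P (\<tau> \<circ> \<sigma>)"
proof (rule ext)
  fix p
  show "(Phi \<Gamma> P \<tau> \<circ> Phi \<Gamma> P \<sigma>) p = Phi \<Gamma> P (\<tau> \<circ> \<sigma>) p"
  proof (cases "\<exists>\<gamma>\<in>\<Gamma>. p \<in> \<gamma> ` P")
    case True
    then obtain \<gamma> x where g: "\<gamma> \<in> \<Gamma>" "x \<in> P" "p = \<gamma> x" by blast
    have sg: "\<sigma> \<gamma> \<in> \<Gamma>" using s g(1) by blast
    have ij: "inj \<gamma>" "inj (\<sigma> \<gamma>)" using inj g(1) sg by blast+
    have "Phi \<Gamma> P \<sigma> p = \<sigma> \<gamma> x" using Phi_in2[OF dj g(1,2) ij(1)] g(3) by simp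
    moreover have "Phi \<Gamma> P \<tau> (\<sigma> \<gamma> x) = \<tau> (\<sigma> \<gamma>) x" using Phi_in2[OF dj sg g(2) ij(2)] .
    moreover have "Phi \<Gamma> P (\<tau> \<circ> \<sigma>) p = \<tau> (\<sigma> \<gamma>) x" using Phi_in2[OF dj g(1,2) ij(1), of "\<tau> \<circ> \<sigma>"] g(3) by simp
    ultimately show ?thesis by simp
  next
    case False
    then show ?thesis using Phi_out[OF False] by simp
  qed
qed

lemma Phi_id:
  assumes dj: "DJ \<Gamma> P" and inj: "\<forall>\<gamma>\<in>\<Gamma>. inj \<gamma>"
  shows "Phi \<Gamma> P id = id"
proof (rule ext)
  fix p
  show "Phi \<Gamma> P id p = id p"
  proof (cases "\<exists>\<gamma>\<in>\<Gamma>. p \<in> \<gamma> ` P")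
    case True
    then obtain \<gamma> x where g: "\<gamma> \<in> \<Gamma>" "x \<in> P" "p = \<gamma> x" by blast
    have ij: "inj \<gamma>" using inj g(1) by blast
    show ?thesis using Phi_in2[OF dj g(1,2) ij, of id] g(3) by simp
  next
    case False
    then show ?thesis using Phi_out[OF False] by simp
  qed
qed

lemma Phi_fix:
  assumes "DJ \<Gamma> P" "\<gamma> \<in> \<Gamma>" "inj \<gamma>" "\<sigma> \<gamma> = \<gamma>" "p \<in> \<gamma> ` P"
  shows "Phi \<Gamma> P \<sigma> p = p"
proof -
  obtain x where "x \<in> P" "p = \<gamma> x" using assms(5) by blast
  then show ?thesis using Phi_in2[OF assms(1,2) _ assms(3), of x \<sigma>] assms(4) by simp
qed

lemma Phi_bij:
  assumes dj: "DJ \<Gamma> P" and inj: "\<forall>\<gamma>\<in>\<Gamma>. inj \<gamma>" and s: "\<sigma> permutes \<Gamma>"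
  shows "bij (Phi \<Gamma> P \<sigma>)"
proof -
  have si: "inv \<sigma> permutes \<Gamma>" using permutes_inv[OF s] .
  have m1: "\<forall>\<gamma>\<in>\<Gamma>. \<sigma> \<gamma> \<in> \<Gamma>" using permutes_in_image[OF s] by blast
  have m2: "\<forall>\<gamma>\<in>\<Gamma>. inv \<sigma> \<gamma> \<in> \<Gamma>" using permutes_in_image[OF si] by blast
  have "Phi \<Gamma> P (inv \<sigma>) \<circ> Phi \<Gamma> P \<sigma> = id"
    using Phi_comp[OF dj inj m1, of "inv \<sigma>"] permutes_inv_o(2)[OF s] Phi_id[OF dj inj] by simp
  moreover have "Phi \<Gamma> P \<sigma> \<circ> Phi \<Gamma> P (inv \<sigma>) = id"
    using Phi_comp[OF dj inj m2, of "\<sigma>"] permutes_inv_o(1)[OF s] Phi_id[OF dj inj] by simp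
  ultimately show ?thesis using o_bij by blast
qed

lemma DJ_sep:
  assumes "DJ \<Gamma> (P1 \<union> P2)" "P1 \<inter> P2 = {}" "\<forall>\<gamma>\<in>\<Gamma>. inj \<gamma>" "\<gamma> \<in> \<Gamma>" "\<gamma>' \<in> \<Gamma>" "x \<in> P1" "y \<in> P2"
  shows "\<gamma> x \<noteq> \<gamma>' y"
proof
  assume e: "\<gamma> x = \<gamma>' y"
  have "\<gamma> x \<in> \<gamma> ` (P1 \<union> P2)" "\<gamma> x \<in> \<gamma>' ` (P1 \<union> P2)" using assms(6,7) e by blast+
  then have "\<gamma> = \<gamma>'" using DJ_D[OF assms(1,4,5)] by blast
  then have "x = y" using e assms(3,4) by (metis injD)
  then show False using assms(2,6,7) by blast
qed

lemma DJ_mono: "DJ \<Gamma> P \<Longrightarrow> Q \<subseteq> P \<Longrightarrow> DJ \<Gamma> Q"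
  unfolding DJ_def by blast

lemma Phi_split:
  assumes dj: "DJ \<Gamma> (P1 \<union> P2)" and d: "P1 \<inter> P2 = {}" and inj: "\<forall>\<gamma>\<in>\<Gamma>. inj \<gamma>"
    and s: "\<forall>\<gamma>\<in>\<Gamma>. \<sigma> \<gamma> \<in> \<Gamma>"
  shows "Phi \<Gamma> (P1 \<union> P2) \<sigma> = Phi \<Gamma> P1 \<sigma> \<circ> Phi \<Gamma> P2 \<sigma>"
proof (rule ext)
  fix p
  have dj1: "DJ \<Gamma> P1" and dj2: "DJ \<Gamma> P2" using DJ_mono[OF dj] by blast+
  show "Phi \<Gamma> (P1 \<union> P2) \<sigma> p = (Phi \<Gamma> P1 \<sigma> \<circ> Phi \<Gamma> P2 \<sigma>) p"
  proof (cases "\<exists>\<gamma>\<in>\<Gamma>. p \<in> \<gamma> ` (P1 \<union> P2)")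
    case True
    then obtain \<gamma> x where g: "\<gamma> \<in> \<Gamma>" "x \<in> P1 \<union> P2" "p = \<gamma> x" by blast
    have ij: "inj \<gamma>" "inj (\<sigma> \<gamma>)" using inj g(1) s by blast+
    have sg: "\<sigma> \<gamma> \<in> \<Gamma>" using s g(1) by blast
    have L: "Phi \<Gamma> (P1 \<union> P2) \<sigma> p = \<sigma> \<gamma> x" using Phi_in2[OF dj g(1,2) ij(1)] g(3) by simp
    show ?thesis
    proof (cases "x \<in> P1")
      case True
      have "\<not> (\<exists>\<gamma>'\<in>\<Gamma>. p \<in> \<gamma>' ` P2)"
      proof
        assume "\<exists>\<gamma>'\<in>\<Gamma>. p \<in> \<gamma>' ` P2"
        then obtain \<gamma>' y where "\<gamma>' \<in> \<Gamma>" "y \<in> P2" "p = \<gamma>' y" by blast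
        then show False using DJ_sep[OF dj d inj g(1) _ True] g(3) by metis
      qed
      then have "Phi \<Gamma> P2 \<sigma> p = p" by (rule Phi_out)
      moreover have "Phi \<Gamma> P1 \<sigma> p = \<sigma> \<gamma> x" using Phi_in2[OF dj1 g(1) True ij(1)] g(3) by simp
      ultimately show ?thesis using L by simp
    next
      case False
      then have x2: "x \<in> P2" using g(2) by blast
      have "Phi \<Gamma> P2 \<sigma> p = \<sigma> \<gamma> x" using Phi_in2[OF dj2 g(1) x2 ij(1)] g(3) by simp
      moreover have "\<not> (\<exists>\<gamma>'\<in>\<Gamma>. \<sigma> \<gamma> x \<in> \<gamma>' ` P1)"
      proof
        assume "\<exists>\<gamma>'\<in>\<Gamma>. \<sigma> \<gamma> x \<in> \<gamma>' ` P1"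
        then obtain \<gamma>' y where "\<gamma>' \<in> \<Gamma>" "y \<in> P1" "\<sigma> \<gamma> x = \<gamma>' y" by blast
        then show False using DJ_sep[OF dj d inj _ sg _ x2] by metis
      qed
      then have "Phi \<Gamma> P1 \<sigma> (\<sigma> \<gamma> x) = \<sigma> \<gamma> x" by (rule Phi_out)
      ultimately show ?thesis using L by simp
    qed
  next
    case False
    have n1: "\<not> (\<exists>\<gamma>\<in>\<Gamma>. p \<in> \<gamma> ` P1)" and n2: "\<not> (\<exists>\<gamma>\<in>\<Gamma>. p \<in> \<gamma> ` P2)" using False by blast+
    show ?thesis using Phi_out[OF False] Phi_out[OF n1] Phi_out[OF n2] by simp
  qed
qed

lemma Phi_outT:
  assumes "\<forall>\<gamma>\<in>\<Gamma>. \<gamma> ` P \<subseteq> topspace X" "p \<notin> topspace X"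
  shows "Phi \<Gamma> P \<sigma> p = p"
  using assms by (intro Phi_out) blast

lemma bij_fix_outside:
  assumes "bij f" "\<forall>p. p \<notin> T \<longrightarrow> f p = p"
  shows "f ` T = T"
proof
  show "f ` T \<subseteq> T"
  proof
    fix q assume "q \<in> f ` T"
    then obtain p where p: "p \<in> T" "q = f p" by blast
    show "q \<in> T"
    proof (rule ccontr)
      assume "q \<notin> T"
      then have "f q = q" using assms(2) by blast
      then have "q = p" using p(2) bij_is_inj[OF assms(1)] by (metis injD)
      then show False using p(1) \<open>q \<notin> T\<close> by blast
    qed
  qed
  show "T \<subseteq> f ` T"
  proof
    fix q assume q: "q \<in> T"
    obtain p where p: "q = f p" using bij_is_surj[OF assms(1)] by (metis surj_def)
    have "p \<in> T"
    proof (rule ccontr)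
      assume "p \<notin> T"
      then have "f p = p" using assms(2) by blast
      then show False using p q \<open>p \<notin> T\<close> by simp
    qed
    then show "q \<in> f ` T" using p by blast
  qed
qed


lemma AF':
  fixes Q :: "'i \<Rightarrow> 'a set" and h :: "'i \<Rightarrow> 'a \<Rightarrow> 'a"
  assumes af: "approx_full X G" and sub: "subgroup_Homeo X G"
    and fin: "finite I" and cl: "\<forall>i\<in>I. clopen_in X (Q i)"
    and dj: "\<forall>i\<in>I. \<forall>j\<in>I. i \<noteq> j \<longrightarrow> Q i \<inter> Q j = {}"
    and cov: "(\<Union>i\<in>I. Q i) = topspace X" and hG: "\<forall>i\<in>I. h i \<in> G"
    and ag: "\<forall>i\<in>I. \<forall>p\<in>Q i. f p = h i p"
    and injf: "inj_on f (topspace X)" and sur: "f ` topspace X = topspace X"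
    and e: "e \<in> I" "Q e \<noteq> {}" and uniq: "\<forall>i\<in>I. i \<noteq> e \<longrightarrow> Q i \<noteq> {} \<longrightarrow> h i \<noteq> h e"
  shows "\<exists>ch\<in>G. \<forall>i\<in>I. i \<noteq> e \<longrightarrow> (\<forall>p\<in>Q i. ch p = f p)"
proof -
  define J where "J = {i\<in>I. Q i \<noteq> {}}"
  define \<Gamma> where "\<Gamma> = h ` J"
  define D where "D = (\<lambda>\<gamma>. \<Union> (Q ` {i\<in>J. h i = \<gamma>}))"
  have finJ: "finite J" using fin unfolding J_def by simp
  have fG: "finite \<Gamma>" unfolding \<Gamma>_def using finJ by simp
  have GG: "\<Gamma> \<subseteq> G" unfolding \<Gamma>_def J_def using hG by blast
  have Dmem: "\<And>\<gamma> p. p \<in> D \<gamma> \<longleftrightarrow> (\<exists>i\<in>J. h i = \<gamma> \<and> p \<in> Q i)" unfolding D_def by blast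
  have QT: "\<forall>i\<in>I. Q i \<subseteq> topspace X" using cov by blast
  have DT: "\<And>\<gamma>. D \<gamma> \<subseteq> topspace X" using QT unfolding D_def J_def by blast
  have agD: "\<gamma> p = f p" if p: "p \<in> D \<gamma>" for \<gamma> p
  proof -
    obtain i where i: "i \<in> J" "h i = \<gamma>" "p \<in> Q i" using p unfolding Dmem by blast
    have "f p = h i p" using ag i(1,3) unfolding J_def by blast
    then show ?thesis using i(2) by simp
  qed
  have imD: "\<gamma> ` D \<gamma> = f ` D \<gamma>" for \<gamma> by (rule image_cong[OF refl agD])
  have clD: "\<And>\<gamma>. clopen_in X (D \<gamma>)"
  proof -
    fix \<gamma>
    have "finite (Q ` {i\<in>J. h i = \<gamma>})" using finJ by simp
    moreover have "\<forall>A\<in>Q ` {i\<in>J. h i = \<gamma>}. clopen_in X A" using cl unfolding J_def by blast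
    ultimately show "clopen_in X (D \<gamma>)" unfolding D_def by (rule clopen_Union_fin)
  qed
  have neD: "D \<gamma> \<noteq> {}" if g: "\<gamma> \<in> \<Gamma>" for \<gamma>
  proof -
    obtain i where i: "i \<in> J" "\<gamma> = h i" using g unfolding \<Gamma>_def by blast
    obtain p where p: "p \<in> Q i" using i(1) unfolding J_def by blast
    have "p \<in> D \<gamma>" unfolding Dmem using i p by blast
    then show ?thesis by blast
  qed
  have djD: "\<And>\<gamma> \<gamma>'. \<gamma> \<noteq> \<gamma>' \<Longrightarrow> D \<gamma> \<inter> D \<gamma>' = {}"
  proof -
    fix \<gamma> \<gamma>' :: "'a \<Rightarrow> 'a" assume ne: "\<gamma> \<noteq> \<gamma>'"
    show "D \<gamma> \<inter> D \<gamma>' = {}"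
    proof (rule ccontr)
      assume "D \<gamma> \<inter> D \<gamma>' \<noteq> {}"
      then obtain p where "p \<in> D \<gamma>" "p \<in> D \<gamma>'" by blast
      then obtain i j where ij: "i \<in> J" "h i = \<gamma>" "p \<in> Q i" "j \<in> J" "h j = \<gamma>'" "p \<in> Q j"
        unfolding Dmem by blast
      then have "i \<noteq> j" using ne by blast
      then have "Q i \<inter> Q j = {}" using dj ij unfolding J_def by blast
      then show False using ij by blast
    qed
  qed
  have covD: "(\<Union>\<gamma>\<in>\<Gamma>. D \<gamma>) = topspace X"
  proof
    show "(\<Union>\<gamma>\<in>\<Gamma>. D \<gamma>) \<subseteq> topspace X" using DT by blast
    show "topspace X \<subseteq> (\<Union>\<gamma>\<in>\<Gamma>. D \<gamma>)"
    proof
      fix p assume "p \<in> topspace X"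
      then obtain i where i: "i \<in> I" "p \<in> Q i" using cov by blast
      then have "i \<in> J" unfolding J_def by blast
      then have "p \<in> D (h i)" "h i \<in> \<Gamma>" using i unfolding \<Gamma>_def Dmem by blast+
      then show "p \<in> (\<Union>\<gamma>\<in>\<Gamma>. D \<gamma>)" by blast
    qed
  qed
  have P1: "clopen_partition X \<Gamma> D"
    unfolding clopen_partition_def using clD neD djD covD by blast
  have P2: "clopen_partition X \<Gamma> (\<lambda>\<gamma>. \<gamma> ` D \<gamma>)"
    unfolding clopen_partition_def
  proof (intro conjI ballI impI)
    fix \<gamma> assume g: "\<gamma> \<in> \<Gamma>"
    show "clopen_in X (\<gamma> ` D \<gamma>)" using G_clopen[OF sub _ clD] GG g by blast
    show "\<gamma> ` D \<gamma> \<noteq> {}" using neD[OF g] by blast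
  next
    fix \<gamma> \<gamma>' assume "\<gamma> \<in> \<Gamma>" "\<gamma>' \<in> \<Gamma>" "\<gamma> \<noteq> \<gamma>'"
    then have "D \<gamma> \<inter> D \<gamma>' = {}" using djD by blast
    then have "f ` D \<gamma> \<inter> f ` D \<gamma>' = {}"
      using inj_on_image_Int[OF injf DT[of \<gamma>] DT[of \<gamma>']] by simp
    then show "\<gamma> ` D \<gamma> \<inter> \<gamma>' ` D \<gamma>' = {}" unfolding imD[of \<gamma>] imD[of \<gamma>'] .
  next
    have "(\<Union>\<gamma>\<in>\<Gamma>. \<gamma> ` D \<gamma>) = (\<Union>\<gamma>\<in>\<Gamma>. f ` D \<gamma>)" using imD by (rule SUP_cong[OF refl])
    also have "\<dots> = f ` (\<Union>\<gamma>\<in>\<Gamma>. D \<gamma>)" by blast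
    also have "\<dots> = topspace X" using covD sur by simp
    finally show "(\<Union>\<gamma>\<in>\<Gamma>. \<gamma> ` D \<gamma>) = topspace X" .
  qed
  have eJ: "e \<in> J" using e unfolding J_def by blast
  have heG: "h e \<in> \<Gamma>" unfolding \<Gamma>_def using eJ by blast
  have "finite \<Gamma> \<and> \<Gamma> \<subseteq> G \<and> clopen_partition X \<Gamma> D \<and> clopen_partition X \<Gamma> (\<lambda>\<gamma>. \<gamma> ` D \<gamma>) \<and> h e \<in> \<Gamma>"
    using fG GG P1 P2 heG by blast
  then obtain ch where ch: "ch \<in> G" "\<forall>\<gamma>\<in>\<Gamma> - {h e}. \<forall>p\<in>D \<gamma>. ch p = \<gamma> p"
    using af[unfolded approx_full_def, THEN spec[where x=\<Gamma>], THEN spec[where x=D], THEN spec[where x="h e"]]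
    by blast
  show ?thesis
  proof (intro bexI[OF _ ch(1)] ballI impI)
    fix i p assume i: "i \<in> I" "i \<noteq> e" "p \<in> Q i"
    then have iJ: "i \<in> J" unfolding J_def by blast
    have "h i \<noteq> h e" using uniq i by blast
    then have "h i \<in> \<Gamma> - {h e}" using iJ unfolding \<Gamma>_def by blast
    moreover have "p \<in> D (h i)" using iJ i(3) unfolding Dmem by blast
    ultimately have "ch p = h i p" using ch(2) by blast
    then show "ch p = f p" using ag i by metis
  qed
qed

lemma comm_gen:
  assumes b: "bij ch" and a: "\<forall>p. p \<notin> W \<longrightarrow> ch p = Y p" and f: "\<forall>p\<in>W. Y p = p"
    and i: "\<forall>p. Y (Y p) = p"
  shows "\<forall>q. q \<notin> W \<longrightarrow> inv ch q = Y q \<and> Y q \<notin> W" "\<forall>q\<in>W. inv ch q \<in> W"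
proof -
  have Yout: "Y q \<notin> W" if q: "q \<notin> W" for q
  proof
    assume q2: "Y q \<in> W"
    have "Y (Y q) = Y q" using f q2 by blast
    moreover have "Y (Y q) = q" using i by blast
    ultimately have "q = Y q" by simp
    then show False using q q2 by simp
  qed
  have inv1: "inv ch q = Y q" if q: "q \<notin> W" for q
  proof -
    have "ch (Y q) = Y (Y q)" using a Yout[OF q] by blast
    moreover have "Y (Y q) = q" using i by blast
    ultimately have "ch (Y q) = q" by simp
    then show "inv ch q = Y q" using b bij_inv_eq_iff by metis
  qed
  have inv2: "inv ch q \<in> W" if q: "q \<in> W" for q
  proof (rule ccontr)
    assume q2: "inv ch q \<notin> W"
    have "ch (inv ch q) = q" using b bij_inv_eq_iff by metis
    moreover have "ch (inv ch q) = Y (inv ch q)" using a q2 by blast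
    ultimately have "Y (inv ch q) = q" by simp
    then show False using Yout[OF q2] q by simp
  qed
  show "\<forall>q. q \<notin> W \<longrightarrow> inv ch q = Y q \<and> Y q \<notin> W" using inv1 Yout by blast
  show "\<forall>q\<in>W. inv ch q \<in> W" using inv2 by blast
qed

lemma comm_lemma:
  assumes b1: "bij ch1" and b2: "bij ch2"
    and a1: "\<forall>p. p \<notin> W1 \<longrightarrow> ch1 p = X1 p" and a2: "\<forall>p. p \<notin> W2 \<longrightarrow> ch2 p = X2 p"
    and f1: "\<forall>p\<in>W1 \<union> W2. X1 p = p" and f2: "\<forall>p\<in>W1 \<union> W2. X2 p = p"
    and d: "W1 \<inter> W2 = {}" and i1: "\<forall>p. X1 (X1 p) = p" and i2: "\<forall>p. X2 (X2 p) = p"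
  shows "ch1 \<circ> ch2 \<circ> inv ch1 \<circ> inv ch2 = X1 \<circ> X2 \<circ> X1 \<circ> X2"
proof -
  have f1a: "\<forall>p\<in>W1. X1 p = p" using f1 by blast
  have f2a: "\<forall>p\<in>W2. X2 p = p" using f2 by blast
  note g1 = comm_gen[OF b1 a1 f1a i1]
  note g2 = comm_gen[OF b2 a2 f2a i2]
  have c1: "ch1 (inv ch1 q) = q" for q using b1 bij_inv_eq_iff by metis
  have c2: "ch2 (inv ch2 q) = q" for q using b2 bij_inv_eq_iff by metis
  have pres1: "X1 q \<notin> W1 \<union> W2" if q: "q \<notin> W1 \<union> W2" for q
  proof
    assume q2: "X1 q \<in> W1 \<union> W2"
    have "X1 (X1 q) = X1 q" using f1 q2 by blast
    moreover have "X1 (X1 q) = q" using i1 by blast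
    ultimately have "q = X1 q" by simp
    then show False using q q2 by simp
  qed
  have pres2: "X2 q \<notin> W1 \<union> W2" if q: "q \<notin> W1 \<union> W2" for q
  proof
    assume q2: "X2 q \<in> W1 \<union> W2"
    have "X2 (X2 q) = X2 q" using f2 q2 by blast
    moreover have "X2 (X2 q) = q" using i2 by blast
    ultimately have "q = X2 q" by simp
    then show False using q q2 by simp
  qed
  show ?thesis
  proof (rule ext)
    fix p
    show "(ch1 \<circ> ch2 \<circ> inv ch1 \<circ> inv ch2) p = (X1 \<circ> X2 \<circ> X1 \<circ> X2) p"
    proof (cases "p \<in> W1")
      case True
      then have pn: "p \<notin> W2" using d by blast
      have x2p: "X2 p = p" using f2 True by blast
      have x1p: "X1 p = p" using f1 True by blast
      have s1: "inv ch2 p = p" using g2(1) pn x2p by metis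
      define r where "r = inv ch1 p"
      have r: "r \<in> W1" using g1(2) True unfolding r_def by blast
      then have rn: "r \<notin> W2" using d by blast
      have x2r: "X2 r = r" using f2 r by blast
      have s2: "ch2 r = r" using a2 rn x2r by metis
      have s3: "ch1 r = p" unfolding r_def using c1 by blast
      have L: "(ch1 \<circ> ch2 \<circ> inv ch1 \<circ> inv ch2) p = p"
        unfolding comp_def s1 r_def[symmetric] s2 s3 by (rule refl)
      have R: "(X1 \<circ> X2 \<circ> X1 \<circ> X2) p = p" unfolding comp_def x2p x1p x2p x1p by (rule refl)
      show ?thesis using L R by (rule trans[OF _ sym])
    next
      case F1: False
      show ?thesis
      proof (cases "p \<in> W2")
        case True
        have x2p: "X2 p = p" using f2 True by blast
        have x1p: "X1 p = p" using f1 True by blast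
        define r where "r = inv ch2 p"
        have r: "r \<in> W2" using g2(2) True unfolding r_def by blast
        then have rn: "r \<notin> W1" using d by blast
        have x1r: "X1 r = r" using f1 r by blast
        have s1: "inv ch1 r = r" using g1(1) rn x1r by metis
        have s2: "ch2 r = p" unfolding r_def using c2 by blast
        have s3: "ch1 p = p" using a1 F1 x1p by metis
        have L: "(ch1 \<circ> ch2 \<circ> inv ch1 \<circ> inv ch2) p = p"
          unfolding comp_def r_def[symmetric] s1 s2 s3 by (rule refl)
        have R: "(X1 \<circ> X2 \<circ> X1 \<circ> X2) p = p" unfolding comp_def x2p x1p x2p x1p by (rule refl)
        show ?thesis using L R by (rule trans[OF _ sym])
      next
        case False
        then have pn: "p \<notin> W1 \<union> W2" using F1 by blast
        define a where "a = X2 p"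
        have an: "a \<notin> W1 \<union> W2" unfolding a_def by (rule pres2[OF pn])
        have a1': "inv ch2 p = a" using g2(1) False unfolding a_def by blast
        define b where "b = X1 a"
        have bn: "b \<notin> W1 \<union> W2" unfolding b_def by (rule pres1[OF an])
        have b1': "inv ch1 a = b" using g1(1) an unfolding b_def by blast
        define c where "c = X2 b"
        have cn: "c \<notin> W1 \<union> W2" unfolding c_def by (rule pres2[OF bn])
        have c1': "ch2 b = c" using a2 bn unfolding c_def by blast
        have e: "ch1 c = X1 c" using a1 cn by blast
        have L: "(ch1 \<circ> ch2 \<circ> inv ch1 \<circ> inv ch2) p = X1 c"
          unfolding comp_def a1' b1' c1' e by (rule refl)
        have R: "(X1 \<circ> X2 \<circ> X1 \<circ> X2) p = X1 c"
          unfolding comp_def c_def b_def a_def by (rule refl)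
        show ?thesis using L R by (rule trans[OF _ sym])
      qed
    qed
  qed
qed


lemma ball4: "(\<forall>i\<in>{0::nat,1,2,3}. P i) \<longleftrightarrow> P 0 \<and> P 1 \<and> P 2 \<and> P 3"
  by auto

lemma G_inj: "subgroup_Homeo X G \<Longrightarrow> \<Gamma> \<subseteq> G \<Longrightarrow> \<forall>\<gamma>\<in>\<Gamma>. inj \<gamma>"
  using G_facts(1) bij_is_inj by blast

lemma TR:
  assumes sub: "subgroup_Homeo X G" and af: "approx_full X G" and GG: "\<Gamma> \<subseteq> G"
    and dj: "DJ \<Gamma> P" and cT: "\<forall>\<gamma>\<in>\<Gamma>. \<gamma> ` P \<subseteq> topspace X" and clP: "clopen_in X P"
    and x: "x \<in> \<Gamma>" and y: "y \<in> \<Gamma>" and xy: "x \<noteq> y" and neP: "P \<noteq> {}"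
    and clW: "clopen_in X W" and neW: "W \<noteq> {}" and Wd: "\<forall>\<gamma>\<in>\<Gamma>. W \<inter> \<gamma> ` P = {}"
    and om: "\<omega> \<in> G" and ofix: "\<forall>p. p \<in> x ` P \<or> p \<in> y ` P \<or> p \<in> W \<longrightarrow> \<omega> p = p"
    and ont: "\<exists>p. \<omega> p \<noteq> p"
  shows "\<exists>ch\<in>G. \<forall>p. p \<notin> W \<longrightarrow> ch p = Phi \<Gamma> P (Transposition.transpose x y) p"
proof -
  define T where "T = topspace X"
  define f where "f = Phi \<Gamma> P (Transposition.transpose x y)"
  have inj: "\<forall>\<gamma>\<in>\<Gamma>. inj \<gamma>" using G_inj[OF sub GG] .
  have perm: "Transposition.transpose x y permutes \<Gamma>" using permutes_swap_id[OF x y] .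
  have bf: "bij f" unfolding f_def using Phi_bij[OF dj inj perm] .
  have fout: "\<forall>p. p \<notin> T \<longrightarrow> f p = p" unfolding f_def T_def using Phi_outT[OF cT] by blast
  have fT: "f ` T = T" using bij_fix_outside[OF bf fout] .
  have injf: "inj_on f T" using bij_is_inj[OF bf] by (rule inj_on_subset) simp
  define R where "R = T - (x ` P \<union> y ` P \<union> W)"
  define Q where "Q = (\<lambda>i::nat. if i = 0 then x ` P else if i = 1 then y ` P else if i = 2 then W else R)"
  define h where "h = (\<lambda>i::nat. if i = 0 then y \<circ> inv x else if i = 1 then x \<circ> inv y else if i = 2 then \<omega> else id)"
  have Q0: "Q 0 = x ` P" and Q1: "Q 1 = y ` P" and Q2: "Q 2 = W" and Q3: "Q 3 = R"
    unfolding Q_def by simp_all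
  have h0: "h 0 = y \<circ> inv x" and h1: "h 1 = x \<circ> inv y" and h2: "h 2 = \<omega>" and h3: "h 3 = id"
    unfolding h_def by simp_all
  have xG: "x \<in> G" and yG: "y \<in> G" using x y GG by blast+
  have ixG: "inv x \<in> G" and iyG: "inv y \<in> G" using G_facts(5)[OF sub xG] G_facts(5)[OF sub yG] by blast+
  have clx: "clopen_in X (x ` P)" using G_clopen[OF sub xG clP] .
  have cly: "clopen_in X (y ` P)" using G_clopen[OF sub yG clP] .
  have clT: "clopen_in X T" unfolding T_def by (rule clopen_top)
  have clR: "clopen_in X R" unfolding R_def
    using clopen_diff[OF clT clopen_Un[OF clopen_Un[OF clx cly] clW]] .
  have dxy: "x ` P \<inter> y ` P = {}" using dj x y xy unfolding DJ_def by blast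
  have dxW: "x ` P \<inter> W = {}" using Wd x by blast
  have dyW: "y ` P \<inter> W = {}" using Wd y by blast
  have xT: "x ` P \<subseteq> T" using cT x unfolding T_def by blast
  have yT: "y ` P \<subseteq> T" using cT y unfolding T_def by blast
  have WT: "W \<subseteq> T" using clopen_sub[OF clW] unfolding T_def .
  have I_cl: "\<forall>i\<in>{0::nat,1,2,3}. clopen_in X (Q i)"
    unfolding ball4 Q0 Q1 Q2 Q3 using clx cly clW clR by blast
  have I_dj: "\<forall>i\<in>{0::nat,1,2,3}. \<forall>j\<in>{0::nat,1,2,3}. i \<noteq> j \<longrightarrow> Q i \<inter> Q j = {}"
    unfolding ball4 Q0 Q1 Q2 Q3 R_def using dxy dxW dyW by blast
  have I_cov: "(\<Union>i\<in>{0::nat,1,2,3}. Q i) = topspace X"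
  proof -
    have "(\<Union>i\<in>{0::nat,1,2,3}. Q i) = x ` P \<union> (y ` P \<union> (W \<union> R))" by (simp add: Q_def Un_ac)
    also have "\<dots> = T" unfolding R_def using xT yT WT by blast
    finally show ?thesis unfolding T_def .
  qed
  have I_G: "\<forall>i\<in>{0::nat,1,2,3}. h i \<in> G"
    unfolding ball4 h0 h1 h2 h3 using G_comp[OF sub ixG yG] G_comp[OF sub iyG xG] om G_id[OF sub] by blast
  have ag0: "\<forall>p\<in>x ` P. f p = (y \<circ> inv x) p"
  proof
    fix p assume p: "p \<in> x ` P"
    show "f p = (y \<circ> inv x) p" unfolding f_def Phi_in[OF dj x p] by simp
  qed
  have ag1: "\<forall>p\<in>y ` P. f p = (x \<circ> inv y) p"
  proof
    fix p assume p: "p \<in> y ` P"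
    show "f p = (x \<circ> inv y) p" unfolding f_def Phi_in[OF dj y p] by simp
  qed
  have ag2: "\<forall>p\<in>W. f p = \<omega> p"
  proof
    fix p assume p: "p \<in> W"
    have "\<not> (\<exists>\<gamma>\<in>\<Gamma>. p \<in> \<gamma> ` P)" using Wd p by blast
    then have "f p = p" unfolding f_def by (rule Phi_out)
    moreover have "\<omega> p = p" using ofix p by blast
    ultimately show "f p = \<omega> p" by simp
  qed
  have ag3: "\<forall>p\<in>R. f p = id p"
  proof
    fix p assume p: "p \<in> R"
    show "f p = id p"
    proof (cases "\<exists>\<gamma>\<in>\<Gamma>. p \<in> \<gamma> ` P")
      case True
      then obtain \<gamma> where g: "\<gamma> \<in> \<Gamma>" "p \<in> \<gamma> ` P" by blast
      have "\<gamma> \<noteq> x" "\<gamma> \<noteq> y" using g(2) p unfolding R_def by blast+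
      then have "Transposition.transpose x y \<gamma> = \<gamma>" by simp
      then have "f p = p" unfolding f_def using Phi_fix[OF dj g(1) _ _ g(2)] inj g(1) by blast
      then show ?thesis by simp
    next
      case False
      then show ?thesis unfolding f_def using Phi_out[OF False] by simp
    qed
  qed
  have I_ag: "\<forall>i\<in>{0::nat,1,2,3}. \<forall>p\<in>Q i. f p = h i p"
    unfolding ball4 Q0 Q1 Q2 Q3 h0 h1 h2 h3 using ag0 ag1 ag2 ag3 by blast
  obtain p0 where p0: "p0 \<in> P" using neP by blast
  have u0: "h 0 \<noteq> h 2"
  proof
    assume "h 0 = h 2"
    then have e: "y (inv x (x p0)) = \<omega> (x p0)" unfolding h0 h2 by (metis comp_apply)
    have "inv x (x p0) = p0" using inj x by (meson inv_f_f)
    moreover have "\<omega> (x p0) = x p0" using ofix p0 by blast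
    ultimately have "y p0 = x p0" using e by simp
    then show False using dxy p0 by (metis disjoint_iff imageI)
  qed
  have u1: "h 1 \<noteq> h 2"
  proof
    assume "h 1 = h 2"
    then have e: "x (inv y (y p0)) = \<omega> (y p0)" unfolding h1 h2 by (metis comp_apply)
    have "inv y (y p0) = p0" using inj y by (meson inv_f_f)
    moreover have "\<omega> (y p0) = y p0" using ofix p0 by blast
    ultimately have "x p0 = y p0" using e by simp
    then show False using dxy p0 by (metis disjoint_iff imageI)
  qed
  have u3: "h 3 \<noteq> h 2" unfolding h3 h2 using ont by (metis id_apply)
  have I_u: "\<forall>i\<in>{0::nat,1,2,3}. i \<noteq> 2 \<longrightarrow> Q i \<noteq> {} \<longrightarrow> h i \<noteq> h 2"
    unfolding ball4 using u0 u1 u3 by blast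
  have "\<exists>ch\<in>G. \<forall>i\<in>{0::nat,1,2,3}. i \<noteq> 2 \<longrightarrow> (\<forall>p\<in>Q i. ch p = f p)"
    by (rule AF'[OF af sub _ I_cl I_dj I_cov I_G I_ag _ _ _ _ I_u])
       (use injf fT neW in \<open>simp_all add: T_def Q2\<close>)
  then obtain ch where ch: "ch \<in> G" "\<forall>i\<in>{0::nat,1,2,3}. i \<noteq> 2 \<longrightarrow> (\<forall>p\<in>Q i. ch p = f p)" by blast
  have chQ: "\<forall>p\<in>x ` P \<union> y ` P \<union> R. ch p = f p"
  proof -
    have n: "(0::nat) \<noteq> 2" "(1::nat) \<noteq> 2" "(3::nat) \<noteq> 2" by simp_all
    have "(\<forall>p\<in>x ` P. ch p = f p) \<and> (\<forall>p\<in>y ` P. ch p = f p) \<and> (\<forall>p\<in>R. ch p = f p)"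
      using ch(2) n unfolding ball4 Q0 Q1 Q3 by blast
    then show ?thesis by blast
  qed
  show ?thesis
  proof (intro bexI[OF _ ch(1)] allI impI)
    fix p assume pW: "p \<notin> W"
    show "ch p = Phi \<Gamma> P (Transposition.transpose x y) p"
    proof (cases "p \<in> T")
      case True
      then have "p \<in> x ` P \<union> y ` P \<union> R" using pW unfolding R_def by blast
      then show ?thesis using chQ unfolding f_def by blast
    next
      case False
      have "ch p = p" using G_facts(2)[OF sub ch(1)] False unfolding T_def by blast
      moreover have "f p = p" using fout False by blast
      ultimately show ?thesis unfolding f_def by simp
    qed
  qed
qed


lemma three_cycle_comm:
  assumes "a \<noteq> b" "b \<noteq> c" "a \<noteq> c"
  shows "Transposition.transpose b c \<circ> Transposition.transpose a b \<circ> Transposition.transpose b c \<circ> Transposition.transpose a b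
       = Transposition.transpose a b \<circ> Transposition.transpose b c"
  using assms by (auto simp: fun_eq_iff Transposition.transpose_def)

lemma Phi_invol:
  assumes dj: "DJ \<Gamma> P" and inj: "\<forall>\<gamma>\<in>\<Gamma>. inj \<gamma>" and x: "x \<in> \<Gamma>" and y: "y \<in> \<Gamma>"
  shows "\<forall>p. Phi \<Gamma> P (Transposition.transpose x y) (Phi \<Gamma> P (Transposition.transpose x y) p) = p"
proof -
  have m: "\<forall>\<gamma>\<in>\<Gamma>. Transposition.transpose x y \<gamma> \<in> \<Gamma>"
    using permutes_in_image[OF permutes_swap_id[OF x y]] by blast
  have "Phi \<Gamma> P (Transposition.transpose x y) \<circ> Phi \<Gamma> P (Transposition.transpose x y) = id"
    using Phi_comp[OF dj inj m, of "Transposition.transpose x y"] Phi_id[OF dj inj] by simp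
  then show ?thesis by (metis comp_apply id_apply)
qed

lemma K':
  assumes cs: "cantor_space X" and sub: "subgroup_Homeo X G" and vig: "vigorous X G" and af: "approx_full X G"
    and GG: "\<Gamma> \<subseteq> G" and cl1: "clopen_in X P1" and cl2: "clopen_in X P2" and ne1: "P1 \<noteq> {}" and ne2: "P2 \<noteq> {}"
    and d12: "P1 \<inter> P2 = {}" and dj: "DJ \<Gamma> (P1 \<union> P2)" and cT: "\<forall>\<gamma>\<in>\<Gamma>. \<gamma> ` (P1 \<union> P2) \<subseteq> topspace X"
    and a: "a \<in> \<Gamma>" and b: "b \<in> \<Gamma>" and c: "c \<in> \<Gamma>" and ab: "a \<noteq> b" and bc: "b \<noteq> c" and ac: "a \<noteq> c"
  shows "Phi \<Gamma> P1 (Transposition.transpose a b \<circ> Transposition.transpose b c) \<in> G"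
proof -
  have inj: "\<forall>\<gamma>\<in>\<Gamma>. inj \<gamma>" using G_inj[OF sub GG] .
  have dj1: "DJ \<Gamma> P1" using DJ_mono[OF dj] by blast
  have cT1: "\<forall>\<gamma>\<in>\<Gamma>. \<gamma> ` P1 \<subseteq> topspace X" using cT by blast
  have sep: "\<And>\<gamma> \<gamma>' u v. \<gamma> \<in> \<Gamma> \<Longrightarrow> \<gamma>' \<in> \<Gamma> \<Longrightarrow> u \<in> P1 \<Longrightarrow> v \<in> P2 \<Longrightarrow> \<gamma> u \<noteq> \<gamma>' v"
    using DJ_sep[OF dj d12 inj] by blast
  define W1 where "W1 = a ` P2"
  define W2 where "W2 = c ` P2"
  have aG: "a \<in> G" and cG: "c \<in> G" using a c GG by blast+
  have clW1: "clopen_in X W1" unfolding W1_def using G_clopen[OF sub aG cl2] .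
  have clW2: "clopen_in X W2" unfolding W2_def using G_clopen[OF sub cG cl2] .
  have neW1: "W1 \<noteq> {}" and neW2: "W2 \<noteq> {}" unfolding W1_def W2_def using ne2 by blast+
  have dW: "W1 \<inter> W2 = {}"
  proof (rule ccontr)
    assume "W1 \<inter> W2 \<noteq> {}"
    then obtain p where "p \<in> a ` (P1 \<union> P2)" "p \<in> c ` (P1 \<union> P2)" unfolding W1_def W2_def by blast
    then have "a = c" using DJ_D[OF dj a c] by blast
    then show False using ac by blast
  qed
  have W1d: "\<forall>\<gamma>\<in>\<Gamma>. W1 \<inter> \<gamma> ` P1 = {}"
  proof (intro ballI)
    fix \<gamma> assume g: "\<gamma> \<in> \<Gamma>"
    show "W1 \<inter> \<gamma> ` P1 = {}"
    proof (rule ccontr)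
      assume "W1 \<inter> \<gamma> ` P1 \<noteq> {}"
      then obtain u v where uv: "u \<in> P1" "v \<in> P2" "a v = \<gamma> u" unfolding W1_def by blast
      then show False using sep[OF g a uv(1,2)] by simp
    qed
  qed
  have W2d: "\<forall>\<gamma>\<in>\<Gamma>. W2 \<inter> \<gamma> ` P1 = {}"
  proof (intro ballI)
    fix \<gamma> assume g: "\<gamma> \<in> \<Gamma>"
    show "W2 \<inter> \<gamma> ` P1 = {}"
    proof (rule ccontr)
      assume "W2 \<inter> \<gamma> ` P1 \<noteq> {}"
      then obtain u v where uv: "u \<in> P1" "v \<in> P2" "c v = \<gamma> u" unfolding W2_def by blast
      then show False using sep[OF g c uv(1,2)] by simp
    qed
  qed
  obtain \<omega>1 where om1: "\<omega>1 \<in> G" "\<forall>p. p \<notin> W2 \<longrightarrow> \<omega>1 p = p" "\<exists>p\<in>W2. \<omega>1 p \<noteq> p"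
    using nontrivial_in[OF cs sub vig clW2 neW2] by blast
  obtain \<omega>2 where om2: "\<omega>2 \<in> G" "\<forall>p. p \<notin> W1 \<longrightarrow> \<omega>2 p = p" "\<exists>p\<in>W1. \<omega>2 p \<noteq> p"
    using nontrivial_in[OF cs sub vig clW1 neW1] by blast
  have fix1: "\<forall>p. p \<in> b ` P1 \<or> p \<in> c ` P1 \<or> p \<in> W1 \<longrightarrow> \<omega>1 p = p"
    using om1(2) W2d b c dW by blast
  have fix2: "\<forall>p. p \<in> a ` P1 \<or> p \<in> b ` P1 \<or> p \<in> W2 \<longrightarrow> \<omega>2 p = p"
    using om2(2) W1d a b dW by blast
  have ont1: "\<exists>p. \<omega>1 p \<noteq> p" using om1(3) by blast
  have ont2: "\<exists>p. \<omega>2 p \<noteq> p" using om2(3) by blast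
  define X1 where "X1 = Phi \<Gamma> P1 (Transposition.transpose b c)"
  define X2 where "X2 = Phi \<Gamma> P1 (Transposition.transpose a b)"
  obtain ch1 where ch1: "ch1 \<in> G" "\<forall>p. p \<notin> W1 \<longrightarrow> ch1 p = X1 p"
    using TR[OF sub af GG dj1 cT1 cl1 b c bc ne1 clW1 neW1 W1d om1(1) fix1 ont1] unfolding X1_def by blast
  obtain ch2 where ch2: "ch2 \<in> G" "\<forall>p. p \<notin> W2 \<longrightarrow> ch2 p = X2 p"
    using TR[OF sub af GG dj1 cT1 cl1 a b ab ne1 clW2 neW2 W2d om2(1) fix2 ont2] unfolding X2_def by blast
  have outW: "\<And>p. p \<in> W1 \<union> W2 \<Longrightarrow> \<not> (\<exists>\<gamma>\<in>\<Gamma>. p \<in> \<gamma> ` P1)" using W1d W2d by blast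
  have f1: "\<forall>p\<in>W1 \<union> W2. X1 p = p"
  proof
    fix p assume "p \<in> W1 \<union> W2"
    then show "X1 p = p" unfolding X1_def by (rule Phi_out[OF outW])
  qed
  have f2: "\<forall>p\<in>W1 \<union> W2. X2 p = p"
  proof
    fix p assume "p \<in> W1 \<union> W2"
    then show "X2 p = p" unfolding X2_def by (rule Phi_out[OF outW])
  qed
  have i1: "\<forall>p. X1 (X1 p) = p" unfolding X1_def using Phi_invol[OF dj1 inj b c] .
  have i2: "\<forall>p. X2 (X2 p) = p" unfolding X2_def using Phi_invol[OF dj1 inj a b] .
  have b1: "bij ch1" using G_facts(1)[OF sub ch1(1)] .
  have b2: "bij ch2" using G_facts(1)[OF sub ch2(1)] .
  have E: "ch1 \<circ> ch2 \<circ> inv ch1 \<circ> inv ch2 = X1 \<circ> X2 \<circ> X1 \<circ> X2"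
    using comm_lemma[OF b1 b2 ch1(2) ch2(2) f1 f2 dW i1 i2] .
  have mbc: "\<forall>\<gamma>\<in>\<Gamma>. Transposition.transpose b c \<gamma> \<in> \<Gamma>"
    using permutes_in_image[OF permutes_swap_id[OF b c]] by blast
  have mab: "\<forall>\<gamma>\<in>\<Gamma>. Transposition.transpose a b \<gamma> \<in> \<Gamma>"
    using permutes_in_image[OF permutes_swap_id[OF a b]] by blast
  have m3: "\<forall>\<gamma>\<in>\<Gamma>. (Transposition.transpose b c \<circ> Transposition.transpose a b) \<gamma> \<in> \<Gamma>"
    using mbc mab by simp
  define s where "s = Transposition.transpose b c \<circ> Transposition.transpose a b"
  have Y: "X1 \<circ> X2 = Phi \<Gamma> P1 s"
    unfolding X1_def X2_def s_def by (rule Phi_comp[OF dj1 inj mab])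
  have YY: "Phi \<Gamma> P1 s \<circ> Phi \<Gamma> P1 s = Phi \<Gamma> P1 (s \<circ> s)"
    unfolding s_def by (rule Phi_comp[OF dj1 inj m3])
  have ss: "s \<circ> s = Transposition.transpose a b \<circ> Transposition.transpose b c"
    unfolding s_def using three_cycle_comm[OF ab bc ac] by (simp add: o_assoc)
  have "X1 \<circ> X2 \<circ> X1 \<circ> X2 = (X1 \<circ> X2) \<circ> (X1 \<circ> X2)" by (simp add: o_assoc)
  also have "\<dots> = Phi \<Gamma> P1 s \<circ> Phi \<Gamma> P1 s" by (simp only: Y)
  also have "\<dots> = Phi \<Gamma> P1 (s \<circ> s)" by (rule YY)
  also have "\<dots> = Phi \<Gamma> P1 (Transposition.transpose a b \<circ> Transposition.transpose b c)" by (simp only: ss)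
  finally have E2: "X1 \<circ> X2 \<circ> X1 \<circ> X2 = Phi \<Gamma> P1 (Transposition.transpose a b \<circ> Transposition.transpose b c)" .
  have i1G: "inv ch1 \<in> G" using G_facts(5)[OF sub ch1(1)] .
  have i2G: "inv ch2 \<in> G" using G_facts(5)[OF sub ch2(1)] .
  have "ch1 \<circ> ch2 \<in> G" using G_comp[OF sub ch2(1) ch1(1)] .
  then have "ch1 \<circ> ch2 \<circ> inv ch1 \<in> G" using G_comp[OF sub i1G] by blast
  then have "ch1 \<circ> ch2 \<circ> inv ch1 \<circ> inv ch2 \<in> G" using G_comp[OF sub i2G] by blast
  then show ?thesis using E E2 by simp
qed


abbreviation tr where "tr \<equiv> Transposition.transpose"

lemma cT_of: "subgroup_Homeo X G \<Longrightarrow> \<Gamma> \<subseteq> G \<Longrightarrow> P \<subseteq> topspace X \<Longrightarrow> \<forall>\<gamma>\<in>\<Gamma>. \<gamma> ` P \<subseteq> topspace X"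
proof
  fix \<gamma> assume sub: "subgroup_Homeo X G" and GG: "\<Gamma> \<subseteq> G" and PT: "P \<subseteq> topspace X" and g: "\<gamma> \<in> \<Gamma>"
  have "\<gamma> ` topspace X = topspace X" using G_facts(3)[OF sub] GG g by blast
  then show "\<gamma> ` P \<subseteq> topspace X" using PT by blast
qed

lemma K3:
  assumes cs: "cantor_space X" and sub: "subgroup_Homeo X G" and vig: "vigorous X G" and af: "approx_full X G"
    and GG: "\<Gamma> \<subseteq> G" and clP: "clopen_in X P" and neP: "P \<noteq> {}" and dj: "DJ \<Gamma> P"
    and a: "a \<in> \<Gamma>" and b: "b \<in> \<Gamma>" and c: "c \<in> \<Gamma>" and ab: "a \<noteq> b" and bc: "b \<noteq> c" and ac: "a \<noteq> c"
  shows "Phi \<Gamma> P (tr a b \<circ> tr b c) \<in> G"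
proof -
  obtain P1 P2 where w: "clopen_in X P1" "clopen_in X P2" "P1 \<noteq> {}" "P2 \<noteq> {}" "P1 \<inter> P2 = {}" "P1 \<union> P2 = P"
    using cantor_split[OF cs clP neP] by blast
  have inj: "\<forall>\<gamma>\<in>\<Gamma>. inj \<gamma>" using G_inj[OF sub GG] .
  have PT: "P \<subseteq> topspace X" using clopen_sub[OF clP] .
  have cT: "\<forall>\<gamma>\<in>\<Gamma>. \<gamma> ` P \<subseteq> topspace X" using cT_of[OF sub GG PT] .
  have dj12: "DJ \<Gamma> (P1 \<union> P2)" using dj w(6) by simp
  have dj21: "DJ \<Gamma> (P2 \<union> P1)" using dj w(6) by (simp add: Un_commute)
  have cT12: "\<forall>\<gamma>\<in>\<Gamma>. \<gamma> ` (P1 \<union> P2) \<subseteq> topspace X" using cT w(6) by simp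
  have cT21: "\<forall>\<gamma>\<in>\<Gamma>. \<gamma> ` (P2 \<union> P1) \<subseteq> topspace X" using cT w(6) by (simp add: Un_commute)
  have d21: "P2 \<inter> P1 = {}" using w(5) by blast
  have m: "\<forall>\<gamma>\<in>\<Gamma>. (tr a b \<circ> tr b c) \<gamma> \<in> \<Gamma>"
    using permutes_in_image[OF permutes_swap_id[OF a b]] permutes_in_image[OF permutes_swap_id[OF b c]] by simp
  have "Phi \<Gamma> (P1 \<union> P2) (tr a b \<circ> tr b c) = Phi \<Gamma> P1 (tr a b \<circ> tr b c) \<circ> Phi \<Gamma> P2 (tr a b \<circ> tr b c)"
    by (rule Phi_split[OF dj12 w(5) inj m])
  then have E: "Phi \<Gamma> P (tr a b \<circ> tr b c) = Phi \<Gamma> P1 (tr a b \<circ> tr b c) \<circ> Phi \<Gamma> P2 (tr a b \<circ> tr b c)"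
    using w(6) by simp
  have G1: "Phi \<Gamma> P1 (tr a b \<circ> tr b c) \<in> G"
    by (rule K'[OF cs sub vig af GG w(1,2,3,4,5) dj12 cT12 a b c ab bc ac])
  have G2: "Phi \<Gamma> P2 (tr a b \<circ> tr b c) \<in> G"
    by (rule K'[OF cs sub vig af GG w(2,1,4,3) d21 dj21 cT21 a b c ab bc ac])
  show ?thesis unfolding E using G_comp[OF sub G2 G1] .
qed

lemma PhiG_tt:
  assumes cs: "cantor_space X" and sub: "subgroup_Homeo X G" and vig: "vigorous X G" and af: "approx_full X G"
    and GG: "\<Gamma> \<subseteq> G" and clP: "clopen_in X P" and neP: "P \<noteq> {}" and dj: "DJ \<Gamma> P"
    and a: "a \<in> \<Gamma>" and b: "b \<in> \<Gamma>" and c: "c \<in> \<Gamma>" and ab: "a \<noteq> b" and bc: "b \<noteq> c"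
  shows "Phi \<Gamma> P (tr a b \<circ> tr b c) \<in> G"
proof (cases "a = c")
  case True
  have inj: "\<forall>\<gamma>\<in>\<Gamma>. inj \<gamma>" using G_inj[OF sub GG] .
  have "tr a b \<circ> tr b c = id" using True by (simp add: transpose_commute)
  then show ?thesis using Phi_id[OF dj inj] G_id[OF sub] by simp
next
  case False
  then show ?thesis using K3[OF cs sub vig af GG clP neP dj a b c ab bc False] by blast
qed

lemma pair:
  assumes cs: "cantor_space X" and sub: "subgroup_Homeo X G" and vig: "vigorous X G" and af: "approx_full X G"
    and GG: "\<Gamma> \<subseteq> G" and clP: "clopen_in X P" and neP: "P \<noteq> {}" and dj: "DJ \<Gamma> P"
    and a: "a \<in> \<Gamma>" and b: "b \<in> \<Gamma>" and c: "c \<in> \<Gamma>" and d: "d \<in> \<Gamma>" and ab: "a \<noteq> b" and cd: "c \<noteq> d"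
  shows "Phi \<Gamma> P (tr a b \<circ> tr c d) \<in> G"
proof (cases "b = c")
  case True
  have "b \<noteq> d" using True cd by simp
  then show ?thesis using PhiG_tt[OF cs sub vig af GG clP neP dj a b d ab] True by simp
next
  case False
  have inj: "\<forall>\<gamma>\<in>\<Gamma>. inj \<gamma>" using G_inj[OF sub GG] .
  have G1: "Phi \<Gamma> P (tr a b \<circ> tr b c) \<in> G" using PhiG_tt[OF cs sub vig af GG clP neP dj a b c ab False] .
  have G2: "Phi \<Gamma> P (tr b c \<circ> tr c d) \<in> G" using PhiG_tt[OF cs sub vig af GG clP neP dj b c d False cd] .
  have m: "\<forall>\<gamma>\<in>\<Gamma>. (tr b c \<circ> tr c d) \<gamma> \<in> \<Gamma>"
    using permutes_in_image[OF permutes_swap_id[OF b c]] permutes_in_image[OF permutes_swap_id[OF c d]] by simp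
  have e: "tr a b \<circ> tr c d = (tr a b \<circ> tr b c) \<circ> (tr b c \<circ> tr c d)"
    by (simp add: fun_eq_iff)
  have "Phi \<Gamma> P (tr a b \<circ> tr b c) \<circ> Phi \<Gamma> P (tr b c \<circ> tr c d) = Phi \<Gamma> P ((tr a b \<circ> tr b c) \<circ> (tr b c \<circ> tr c d))"
    by (rule Phi_comp[OF dj inj m])
  then show ?thesis unfolding e using G_comp[OF sub G2 G1] by simp
qed

lemma Meven:
  assumes cs: "cantor_space X" and sub: "subgroup_Homeo X G" and vig: "vigorous X G" and af: "approx_full X G"
    and GG: "\<Gamma> \<subseteq> G" and clP: "clopen_in X P" and neP: "P \<noteq> {}" and dj: "DJ \<Gamma> P"
    and fin: "finite \<Gamma>" and perm: "p permutes \<Gamma>" and ev: "evenperm p"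
  shows "Phi \<Gamma> P p \<in> G"
proof -
  have inj: "\<forall>\<gamma>\<in>\<Gamma>. inj \<gamma>" using G_inj[OF sub GG] .
  have "(evenperm p \<longrightarrow> Phi \<Gamma> P p \<in> G) \<and>
        (\<not> evenperm p \<longrightarrow> (\<forall>a\<in>\<Gamma>. \<forall>b\<in>\<Gamma>. a \<noteq> b \<longrightarrow> Phi \<Gamma> P (tr a b \<circ> p) \<in> G))"
    using perm fin
  proof (induction rule: permutes_induct)
    case id
    have "Phi \<Gamma> P id \<in> G" using Phi_id[OF dj inj] G_id[OF sub] by simp
    then show ?case using evenperm_id by blast
  next
    case (swap a b p)
    have a: "a \<in> \<Gamma>" and b: "b \<in> \<Gamma>" and ab: "a \<noteq> b" and pp: "p permutes \<Gamma>" using swap by blast+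
    have IH: "(evenperm p \<longrightarrow> Phi \<Gamma> P p \<in> G) \<and>
        (\<not> evenperm p \<longrightarrow> (\<forall>a\<in>\<Gamma>. \<forall>b\<in>\<Gamma>. a \<noteq> b \<longrightarrow> Phi \<Gamma> P (tr a b \<circ> p) \<in> G))" using swap by blast
    have evs: "evenperm (tr a b \<circ> p) \<longleftrightarrow> \<not> evenperm p"
      using evenperm_comp[OF permutation_swap_id permutes_imp_permutation[OF fin pp], of a b] evenperm_swap[of a b] ab
      by simp
    have mp: "\<forall>\<gamma>\<in>\<Gamma>. p \<gamma> \<in> \<Gamma>" using permutes_in_image[OF pp] by blast
    show ?case
    proof (intro conjI impI ballI)
      assume "evenperm (tr a b \<circ> p)"
      then have "\<not> evenperm p" using evs by simp
      then show "Phi \<Gamma> P (tr a b \<circ> p) \<in> G" using IH a b ab by blast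
    next
      fix c d assume ne: "\<not> evenperm (tr a b \<circ> p)" and c: "c \<in> \<Gamma>" and d: "d \<in> \<Gamma>" and cd: "c \<noteq> d"
      have "evenperm p" using ne evs by simp
      then have Gp: "Phi \<Gamma> P p \<in> G" using IH by blast
      have Gt: "Phi \<Gamma> P (tr c d \<circ> tr a b) \<in> G" by (rule pair[OF cs sub vig af GG clP neP dj c d a b cd ab])
      have "Phi \<Gamma> P (tr c d \<circ> tr a b) \<circ> Phi \<Gamma> P p = Phi \<Gamma> P ((tr c d \<circ> tr a b) \<circ> p)"
        by (rule Phi_comp[OF dj inj mp])
      then have "Phi \<Gamma> P (tr c d \<circ> (tr a b \<circ> p)) = Phi \<Gamma> P (tr c d \<circ> tr a b) \<circ> Phi \<Gamma> P p"
        by (simp add: o_assoc)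
      then show "Phi \<Gamma> P (tr c d \<circ> (tr a b \<circ> p)) \<in> G" using G_comp[OF sub Gp Gt] by simp
    qed
  qed
  then show ?thesis using ev by blast
qed


lemma even_orbit_split:
  assumes cs: "cantor_space X" and sub: "subgroup_Homeo X G" and vig: "vigorous X G"
    and CK: "C \<in> Kset X" and eo: "even_orbit X G (orbitG G C)"
  shows "\<exists>P l. clopen_in X P \<and> P \<noteq> {} \<and> l \<in> G \<and> P \<inter> l ` P = {} \<and> C = P \<union> l ` P"
proof -
  obtain y where y: "y \<in> orbits X G" "orbitG G C = orbit_add X G y y"
    using eo unfolding even_orbit_def by blast
  obtain U where U: "U \<in> Kset X" "y = orbitG G U" using y(1) unfolding orbits_def by blast
  have clU: "clopen_in X U" and neU: "U \<noteq> {}" and UT: "U \<noteq> topspace X" using U(1) unfolding Kset_def by blast+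
  have UsT: "U \<subseteq> topspace X" using clopen_sub[OF clU] .
  have clR: "clopen_in X (topspace X - U)" using clopen_diff[OF clopen_top clU] .
  have neR: "topspace X - U \<noteq> {}" using UsT UT by blast
  obtain S1 S2 where s: "clopen_in X S1" "clopen_in X S2" "S1 \<noteq> {}" "S2 \<noteq> {}" "S1 \<inter> S2 = {}"
      "S1 \<union> S2 = topspace X - U"
    using cantor_split[OF cs clR neR] by blast
  have Upt: "U \<subset> topspace X" using UsT UT by blast
  have S1pt: "S1 \<subset> topspace X" using s(6) neU UsT by blast
  have S2pt: "S2 \<subset> topspace X" using s(6) neU UsT by blast
  have v1: "clopen_in X (topspace X) \<and> clopen_in X U \<and> clopen_in X S1 \<and> U \<noteq> {} \<and> S1 \<noteq> {} \<and> U \<subset> topspace X \<and> S1 \<subset> topspace X"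
    using clopen_top clU s(1,3) neU Upt S1pt by (intro conjI)
  have v2: "clopen_in X (topspace X) \<and> clopen_in X U \<and> clopen_in X S2 \<and> U \<noteq> {} \<and> S2 \<noteq> {} \<and> U \<subset> topspace X \<and> S2 \<subset> topspace X"
    using clopen_top clU s(2,4) neU Upt S2pt by (intro conjI)
  obtain \<mu> where mu: "\<mu> \<in> G" "\<mu> ` U \<subseteq> S1"
    using v1 vig[unfolded vigorous_def, THEN spec[where x="topspace X"], THEN spec[where x=U], THEN spec[where x=S1]]
    by blast
  obtain \<nu> where nu: "\<nu> \<in> G" "\<nu> ` U \<subseteq> S2"
    using v2 vig[unfolded vigorous_def, THEN spec[where x="topspace X"], THEN spec[where x=U], THEN spec[where x=S2]]
    by blast
  have dmn: "\<mu> ` U \<inter> \<nu> ` U = {}" using mu(2) nu(2) s(5) by blast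
  have umn: "\<mu> ` U \<union> \<nu> ` U \<noteq> topspace X"
  proof
    assume e: "\<mu> ` U \<union> \<nu> ` U = topspace X"
    obtain u where "u \<in> U" using neU by blast
    then have "u \<in> \<mu> ` U \<union> \<nu> ` U" using e UsT by blast
    then have "u \<in> topspace X - U" using mu(2) nu(2) s(6) by blast
    then show False using \<open>u \<in> U\<close> by blast
  qed
  define Pr where "Pr = (\<lambda>z. \<exists>U V \<mu> \<nu>. U \<in> Kset X \<and> V \<in> Kset X \<and> \<mu> \<in> G \<and> \<nu> \<in> G \<and>
      y = orbitG G U \<and> y = orbitG G V \<and> \<mu> ` U \<inter> \<nu> ` V = {} \<and>
      \<mu> ` U \<union> \<nu> ` V \<noteq> topspace X \<and> z = orbitG G (\<mu> ` U \<union> \<nu> ` V))"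
  have "Pr (orbitG G (\<mu> ` U \<union> \<nu> ` U))" unfolding Pr_def
    by (rule exI[of _ U], rule exI[of _ U], rule exI[of _ \<mu>], rule exI[of _ \<nu>])
       (intro conjI U(1) U(2) mu(1) nu(1) dmn umn refl)
  then have ex: "\<exists>z. Pr z" by (rule exI)
  have oa: "orbit_add X G y y = (SOME z. Pr z)" unfolding orbit_add_def Pr_def by (rule refl)
  have "Pr (orbit_add X G y y)" unfolding oa by (rule someI_ex[OF ex])
  then obtain U' V' \<mu>' \<nu>' where w: "U' \<in> Kset X" "V' \<in> Kset X" "\<mu>' \<in> G" "\<nu>' \<in> G"
      "y = orbitG G U'" "y = orbitG G V'" "\<mu>' ` U' \<inter> \<nu>' ` V' = {}"
      "orbit_add X G y y = orbitG G (\<mu>' ` U' \<union> \<nu>' ` V')"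
    unfolding Pr_def by blast
  have idG: "id \<in> G" using G_id[OF sub] .
  have "C \<in> orbitG G C" unfolding orbitG_def by (intro CollectI exI[of _ id]) (simp add: idG)
  then have "C \<in> orbitG G (\<mu>' ` U' \<union> \<nu>' ` V')" using y(2) w(8) by simp
  then obtain \<beta> where be: "\<beta> \<in> G" "C = \<beta> ` (\<mu>' ` U' \<union> \<nu>' ` V')" unfolding orbitG_def by blast
  have "V' \<in> orbitG G V'" unfolding orbitG_def by (intro CollectI exI[of _ id]) (simp add: idG)
  then have "V' \<in> orbitG G U'" using w(5,6) by simp
  then obtain \<kappa> where ka: "\<kappa> \<in> G" "V' = \<kappa> ` U'" unfolding orbitG_def by blast
  define P where "P = \<beta> ` (\<mu>' ` U')"
  define l where "l = \<beta> \<circ> \<nu>' \<circ> \<kappa> \<circ> inv \<mu>' \<circ> inv \<beta>"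
  have ib: "inj \<beta>" "inj \<mu>'" using G_facts(1)[OF sub be(1)] G_facts(1)[OF sub w(3)] bij_is_inj by blast+
  have "l ` P = \<beta> ` (\<nu>' ` (\<kappa> ` (inv \<mu>' ` (inv \<beta> ` (\<beta> ` (\<mu>' ` U'))))))"
    unfolding l_def P_def by (simp add: image_comp)
  also have "\<dots> = \<beta> ` (\<nu>' ` V')" using ib ka(2) by (simp add: image_inv_f_f)
  finally have lP: "l ` P = \<beta> ` (\<nu>' ` V')" .
  have "l \<in> G"
  proof -
    have i1: "inv \<beta> \<in> G" and i2: "inv \<mu>' \<in> G" using G_facts(5)[OF sub] be(1) w(3) by blast+
    have "\<beta> \<circ> \<nu>' \<in> G" using G_comp[OF sub w(4) be(1)] .
    then have "\<beta> \<circ> \<nu>' \<circ> \<kappa> \<in> G" using G_comp[OF sub ka(1)] by blast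
    then have "\<beta> \<circ> \<nu>' \<circ> \<kappa> \<circ> inv \<mu>' \<in> G" using G_comp[OF sub i2] by blast
    then show ?thesis unfolding l_def using G_comp[OF sub i1] by blast
  qed
  moreover have "clopen_in X P"
  proof -
    have "clopen_in X U'" using w(1) unfolding Kset_def by blast
    then show ?thesis unfolding P_def using G_clopen[OF sub be(1) G_clopen[OF sub w(3)]] by blast
  qed
  moreover have "P \<noteq> {}" unfolding P_def using w(1) unfolding Kset_def by blast
  moreover have "P \<inter> l ` P = {}"
    unfolding lP unfolding P_def using w(7) by (simp add: image_Int[OF ib(1), symmetric])
  moreover have "C = P \<union> l ` P" unfolding lP unfolding P_def be(2) by (rule image_Un)
  ultimately show ?thesis by blast
qed


definition tlift :: "('a \<Rightarrow> 'a) set \<Rightarrow> ('a \<Rightarrow> 'a) \<Rightarrow> (('a \<Rightarrow> 'a) \<Rightarrow> ('a \<Rightarrow> 'a)) \<Rightarrow> ('a \<Rightarrow> 'a) \<Rightarrow> ('a \<Rightarrow> 'a)" where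
  "tlift \<Gamma> l p \<eta> = (if \<eta> \<in> \<Gamma> then p \<eta> else if \<eta> \<in> (\<lambda>\<gamma>. \<gamma> \<circ> l) ` \<Gamma> then p (\<eta> \<circ> inv l) \<circ> l else \<eta>)"

lemma rc_cancel: assumes "bij l" shows "\<gamma> \<circ> l \<circ> inv l = \<gamma>"
proof -
  have e: "l \<circ> inv l = id" using surj_iff bij_is_surj[OF assms] by blast
  have "\<gamma> \<circ> l \<circ> inv l = \<gamma> \<circ> (l \<circ> inv l)" by (simp add: comp_assoc)
  then show ?thesis using e by simp
qed

lemma rc_cancel2: assumes "bij l" shows "\<gamma> \<circ> inv l \<circ> l = \<gamma>"
proof -
  have e: "inv l \<circ> l = id" using inj_iff bij_is_inj[OF assms] by blast
  have "\<gamma> \<circ> inv l \<circ> l = \<gamma> \<circ> (inv l \<circ> l)" by (simp add: comp_assoc)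
  then show ?thesis using e by simp
qed

lemma rc_inj: "bij l \<Longrightarrow> x \<circ> l = y \<circ> l \<Longrightarrow> x = y"
  by (metis rc_cancel)

lemma tr_rc: "bij l \<Longrightarrow> tr (a \<circ> l) (b \<circ> l) (x \<circ> l) = tr a b x \<circ> l"
proof -
  assume l: "bij l"
  have ea: "x \<circ> l = a \<circ> l \<longleftrightarrow> x = a" using rc_inj[OF l] by blast
  have eb: "x \<circ> l = b \<circ> l \<longleftrightarrow> x = b" using rc_inj[OF l] by blast
  show ?thesis unfolding Transposition.transpose_def ea eb by simp
qed

lemma tl_in: "\<eta> \<in> \<Gamma> \<Longrightarrow> tlift \<Gamma> l p \<eta> = p \<eta>"
  unfolding tlift_def by simp

lemma tl_rc: "bij l \<Longrightarrow> \<gamma> \<in> \<Gamma> \<Longrightarrow> \<gamma> \<circ> l \<notin> \<Gamma> \<Longrightarrow> tlift \<Gamma> l p (\<gamma> \<circ> l) = p \<gamma> \<circ> l"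
  unfolding tlift_def using rc_cancel[of l \<gamma>] by auto

lemma tl_out: "\<eta> \<notin> \<Gamma> \<Longrightarrow> \<eta> \<notin> (\<lambda>\<gamma>. \<gamma> \<circ> l) ` \<Gamma> \<Longrightarrow> tlift \<Gamma> l p \<eta> = \<eta>"
  unfolding tlift_def by simp

lemma tl_id:
  assumes l: "bij l" and d: "\<Gamma> \<inter> (\<lambda>\<gamma>. \<gamma> \<circ> l) ` \<Gamma> = {}"
  shows "tlift \<Gamma> l id = id"
proof (rule ext)
  fix \<eta>
  show "tlift \<Gamma> l id \<eta> = id \<eta>"
  proof (cases "\<eta> \<in> \<Gamma>")
    case True then show ?thesis using tl_in[OF True, of l id] by simp
  next
    case F: False
    show ?thesis
    proof (cases "\<eta> \<in> (\<lambda>\<gamma>. \<gamma> \<circ> l) ` \<Gamma>")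
      case True
      then obtain \<gamma> where g: "\<gamma> \<in> \<Gamma>" "\<eta> = \<gamma> \<circ> l" by blast
      show ?thesis using tl_rc[OF l g(1), of id] F g by simp
    next
      case False then show ?thesis using tl_out[OF F False] by simp
    qed
  qed
qed

lemma tl_swap:
  assumes l: "bij l" and d: "\<Gamma> \<inter> (\<lambda>\<gamma>. \<gamma> \<circ> l) ` \<Gamma> = {}" and a: "a \<in> \<Gamma>" and b: "b \<in> \<Gamma>"
    and mp: "\<forall>\<gamma>\<in>\<Gamma>. p \<gamma> \<in> \<Gamma>"
  shows "tlift \<Gamma> l (tr a b \<circ> p) = (tr a b \<circ> tr (a \<circ> l) (b \<circ> l)) \<circ> tlift \<Gamma> l p"
proof (rule ext)
  fix \<eta>
  have al: "a \<circ> l \<notin> \<Gamma>" and bl: "b \<circ> l \<notin> \<Gamma>" using d a b by blast+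
  show "tlift \<Gamma> l (tr a b \<circ> p) \<eta> = ((tr a b \<circ> tr (a \<circ> l) (b \<circ> l)) \<circ> tlift \<Gamma> l p) \<eta>"
  proof (cases "\<eta> \<in> \<Gamma>")
    case True
    have pe: "p \<eta> \<in> \<Gamma>" using mp True by blast
    have n1a: "p \<eta> \<noteq> a \<circ> l" using pe al by metis
    have n1b: "p \<eta> \<noteq> b \<circ> l" using pe bl by metis
    note n1 = n1a n1b
    have "tr (a \<circ> l) (b \<circ> l) (p \<eta>) = p \<eta>" using n1 by simp
    then show ?thesis using tl_in[OF True] by simp
  next
    case F: False
    show ?thesis
    proof (cases "\<eta> \<in> (\<lambda>\<gamma>. \<gamma> \<circ> l) ` \<Gamma>")
      case True
      then obtain \<gamma> where g: "\<gamma> \<in> \<Gamma>" "\<eta> = \<gamma> \<circ> l" by blast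
      have gF: "\<gamma> \<circ> l \<notin> \<Gamma>" using F g by simp
      have L: "tlift \<Gamma> l (tr a b \<circ> p) \<eta> = tr a b (p \<gamma>) \<circ> l" using tl_rc[OF l g(1) gF, of "tr a b \<circ> p"] g(2) by simp
      have R1: "tlift \<Gamma> l p \<eta> = p \<gamma> \<circ> l" using tl_rc[OF l g(1) gF, of p] g(2) by simp
      have R2: "tr (a \<circ> l) (b \<circ> l) (p \<gamma> \<circ> l) = tr a b (p \<gamma>) \<circ> l" using tr_rc[OF l] .
      have inG: "tr a b (p \<gamma>) \<in> \<Gamma>" using permutes_in_image[OF permutes_swap_id[OF a b]] mp g(1) by blast
      then have nG: "tr a b (p \<gamma>) \<circ> l \<notin> \<Gamma>" using d by blast
      then have "tr a b (tr a b (p \<gamma>) \<circ> l) = tr a b (p \<gamma>) \<circ> l" using a b by (metis transpose_apply_other)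
      then show ?thesis using L R1 R2 by simp
    next
      case False
      have n1: "\<eta> \<noteq> a \<circ> l" "\<eta> \<noteq> b \<circ> l" using False a b by blast+
      have n2: "\<eta> \<noteq> a" "\<eta> \<noteq> b" using F a b by blast+
      show ?thesis using tl_out[OF F False] n1 n2 by simp
    qed
  qed
qed

lemma tl_maps:
  assumes l: "bij l" and mp: "\<forall>\<gamma>\<in>\<Gamma>. p \<gamma> \<in> \<Gamma>"
  shows "\<forall>\<eta>\<in>\<Gamma> \<union> (\<lambda>\<gamma>. \<gamma> \<circ> l) ` \<Gamma>. tlift \<Gamma> l p \<eta> \<in> \<Gamma> \<union> (\<lambda>\<gamma>. \<gamma> \<circ> l) ` \<Gamma>"
proof
  fix \<eta> assume e: "\<eta> \<in> \<Gamma> \<union> (\<lambda>\<gamma>. \<gamma> \<circ> l) ` \<Gamma>"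
  show "tlift \<Gamma> l p \<eta> \<in> \<Gamma> \<union> (\<lambda>\<gamma>. \<gamma> \<circ> l) ` \<Gamma>"
  proof (cases "\<eta> \<in> \<Gamma>")
    case True then show ?thesis using tl_in[OF True] mp by simp
  next
    case F: False
    then obtain \<gamma> where g: "\<gamma> \<in> \<Gamma>" "\<eta> = \<gamma> \<circ> l" using e by blast
    have "tlift \<Gamma> l p \<eta> = p \<gamma> \<circ> l" using tl_rc[OF l g(1), of p] F g(2) by simp
    moreover have "p \<gamma> \<in> \<Gamma>" using mp g(1) by blast
    ultimately show ?thesis by blast
  qed
qed

lemma tl_G:
  assumes cs: "cantor_space X" and sub: "subgroup_Homeo X G" and vig: "vigorous X G" and af: "approx_full X G"
    and l: "bij l" and d: "\<Gamma> \<inter> (\<lambda>\<gamma>. \<gamma> \<circ> l) ` \<Gamma> = {}"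
    and GG: "\<Gamma> \<union> (\<lambda>\<gamma>. \<gamma> \<circ> l) ` \<Gamma> \<subseteq> G" and clP: "clopen_in X P" and neP: "P \<noteq> {}"
    and dj: "DJ (\<Gamma> \<union> (\<lambda>\<gamma>. \<gamma> \<circ> l) ` \<Gamma>) P"
    and fin: "finite \<Gamma>" and perm: "p permutes \<Gamma>"
  shows "Phi (\<Gamma> \<union> (\<lambda>\<gamma>. \<gamma> \<circ> l) ` \<Gamma>) P (tlift \<Gamma> l p) \<in> G"
  using perm fin
proof (induction rule: permutes_induct)
  case id
  have inj: "\<forall>\<gamma>\<in>\<Gamma> \<union> (\<lambda>\<gamma>. \<gamma> \<circ> l) ` \<Gamma>. inj \<gamma>" using G_inj[OF sub GG] .
  show ?case unfolding tl_id[OF l d] Phi_id[OF dj inj] by (rule G_id[OF sub])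
next
  case (swap a b p)
  have a: "a \<in> \<Gamma>" and b: "b \<in> \<Gamma>" and ab: "a \<noteq> b" and pp: "p permutes \<Gamma>" using swap by blast+
  have IH: "Phi (\<Gamma> \<union> (\<lambda>\<gamma>. \<gamma> \<circ> l) ` \<Gamma>) P (tlift \<Gamma> l p) \<in> G" using swap by blast
  have inj: "\<forall>\<gamma>\<in>\<Gamma> \<union> (\<lambda>\<gamma>. \<gamma> \<circ> l) ` \<Gamma>. inj \<gamma>" using G_inj[OF sub GG] .
  have mp: "\<forall>\<gamma>\<in>\<Gamma>. p \<gamma> \<in> \<Gamma>" using permutes_in_image[OF pp] by blast
  have a2: "a \<in> \<Gamma> \<union> (\<lambda>\<gamma>. \<gamma> \<circ> l) ` \<Gamma>" and b2: "b \<in> \<Gamma> \<union> (\<lambda>\<gamma>. \<gamma> \<circ> l) ` \<Gamma>"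
    and al: "a \<circ> l \<in> \<Gamma> \<union> (\<lambda>\<gamma>. \<gamma> \<circ> l) ` \<Gamma>" and bl: "b \<circ> l \<in> \<Gamma> \<union> (\<lambda>\<gamma>. \<gamma> \<circ> l) ` \<Gamma>"
    using a b by blast+
  have albl: "a \<circ> l \<noteq> b \<circ> l" using rc_inj[OF l] ab by blast
  have Gt: "Phi (\<Gamma> \<union> (\<lambda>\<gamma>. \<gamma> \<circ> l) ` \<Gamma>) P (tr a b \<circ> tr (a \<circ> l) (b \<circ> l)) \<in> G"
    by (rule pair[OF cs sub vig af GG clP neP dj a2 b2 al bl ab albl])
  have E1: "Phi (\<Gamma> \<union> (\<lambda>\<gamma>. \<gamma> \<circ> l) ` \<Gamma>) P (tr a b \<circ> tr (a \<circ> l) (b \<circ> l)) \<circ> Phi (\<Gamma> \<union> (\<lambda>\<gamma>. \<gamma> \<circ> l) ` \<Gamma>) P (tlift \<Gamma> l p)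
      = Phi (\<Gamma> \<union> (\<lambda>\<gamma>. \<gamma> \<circ> l) ` \<Gamma>) P ((tr a b \<circ> tr (a \<circ> l) (b \<circ> l)) \<circ> tlift \<Gamma> l p)"
    by (rule Phi_comp[OF dj inj tl_maps[OF l mp]])
  have E2: "tlift \<Gamma> l (tr a b \<circ> p) = (tr a b \<circ> tr (a \<circ> l) (b \<circ> l)) \<circ> tlift \<Gamma> l p"
    by (rule tl_swap[OF l d a b mp])
  show ?case unfolding E2 E1[symmetric] by (rule G_comp[OF sub IH Gt])
qed


theorem lemma3p5:
  fixes X :: "'a topology" and G :: "('a \<Rightarrow> 'a) set" and C :: "'a set"
    and \<Gamma> :: "('a \<Rightarrow> 'a) set" and g :: "('a \<Rightarrow> 'a) \<Rightarrow> ('a \<Rightarrow> 'a)" and \<delta> :: "'a \<Rightarrow> 'a"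
  assumes "cantor_space X"
    and "subgroup_Homeo X G"
    and "vigorous X G"
    and "approx_full X G"
    and "C \<in> Kset X"
    and "finite \<Gamma>" and "\<Gamma> \<subseteq> G"
    and "\<forall>\<gamma>1\<in>\<Gamma>. \<forall>\<gamma>2\<in>\<Gamma>. \<gamma>1 ` C \<inter> \<gamma>2 ` C \<noteq> {} \<longrightarrow> \<gamma>1 = \<gamma>2"
    and "g permutes \<Gamma>"
    and "\<delta> \<in> Homeo X"
    and "supp X \<delta> \<subseteq> (\<Union>\<gamma>\<in>\<Gamma>. \<gamma> ` C)"
    and "\<forall>\<gamma>\<in>\<Gamma>. \<forall>p\<in>\<gamma> ` C. \<delta> p = (g \<gamma>) (inv \<gamma> p)"
    and "even_orbit X G (orbitG G C) \<or> evenperm g"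
  shows "\<delta> \<in> G"
proof -
  note cs = assms(1) and sub = assms(2) and vig = assms(3) and af = assms(4)
  note fin = assms(6) and GG = assms(7) and perm = assms(9)
  have inj: "\<forall>\<gamma>\<in>\<Gamma>. inj \<gamma>" using G_inj[OF sub GG] .
  have clC: "clopen_in X C" and neC: "C \<noteq> {}" using assms(5) unfolding Kset_def by blast+
  have djC: "DJ \<Gamma> C" unfolding DJ_def using assms(8) by blast
  have mg: "\<forall>\<gamma>\<in>\<Gamma>. g \<gamma> \<in> \<Gamma>" using permutes_in_image[OF perm] by blast
  have dout: "\<delta> p = p" if np: "\<not> (\<exists>\<gamma>\<in>\<Gamma>. p \<in> \<gamma> ` C)" for p
  proof (cases "p \<in> topspace X")
    case True
    have "p \<notin> supp X \<delta>" using assms(11) np by blast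
    then show ?thesis using True unfolding supp_def by blast
  next
    case False
    then show ?thesis using assms(10) unfolding Homeo_def by blast
  qed
  have din: "\<delta> (\<gamma> c) = g \<gamma> c" if g: "\<gamma> \<in> \<Gamma>" and c: "c \<in> C" for \<gamma> c
  proof -
    have "\<delta> (\<gamma> c) = g \<gamma> (inv \<gamma> (\<gamma> c))" using assms(12) g c by blast
    moreover have "inv \<gamma> (\<gamma> c) = c" using inj g by (meson inv_f_f)
    ultimately show ?thesis by simp
  qed
  from assms(13) show ?thesis
  proof
    assume ev: "evenperm g"
    have "\<delta> = Phi \<Gamma> C g"
    proof (rule ext)
      fix p
      show "\<delta> p = Phi \<Gamma> C g p"
      proof (cases "\<exists>\<gamma>\<in>\<Gamma>. p \<in> \<gamma> ` C")
        case True
        then obtain \<gamma> c where gc: "\<gamma> \<in> \<Gamma>" "c \<in> C" "p = \<gamma> c" by blast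
        have ig: "inj \<gamma>" using inj gc(1) by blast
        show ?thesis using din[OF gc(1,2)] Phi_in2[OF djC gc(1,2) ig, of g] gc(3) by simp
      next
        case False
        then show ?thesis using dout[OF False] Phi_out[OF False] by simp
      qed
    qed
    then show ?thesis using Meven[OF cs sub vig af GG clC neC djC fin perm ev] by simp
  next
    assume eo: "even_orbit X G (orbitG G C)"
    obtain P l where Pl: "clopen_in X P" "P \<noteq> {}" "l \<in> G" "P \<inter> l ` P = {}" "C = P \<union> l ` P"
      using even_orbit_split[OF cs sub vig assms(5) eo] by blast
    have bl: "bij l" using G_facts(1)[OF sub Pl(3)] .
    define \<Gamma>2 where "\<Gamma>2 = \<Gamma> \<union> (\<lambda>\<gamma>. \<gamma> \<circ> l) ` \<Gamma>"
    have PC: "P \<subseteq> C" and lPC: "l ` P \<subseteq> C" using Pl(5) by blast+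
    obtain u0 where u0: "u0 \<in> P" using Pl(2) by blast
    have d: "\<Gamma> \<inter> (\<lambda>\<gamma>. \<gamma> \<circ> l) ` \<Gamma> = {}"
    proof (rule ccontr)
      assume "\<Gamma> \<inter> (\<lambda>\<gamma>. \<gamma> \<circ> l) ` \<Gamma> \<noteq> {}"
      then obtain \<gamma> \<gamma>' where gg: "\<gamma> \<in> \<Gamma>" "\<gamma>' \<in> \<Gamma>" "\<gamma> = \<gamma>' \<circ> l" by blast
      have "\<gamma> u0 \<in> \<gamma> ` C" using u0 PC by blast
      moreover have "\<gamma> u0 \<in> \<gamma>' ` C" using gg(3) u0 lPC by auto
      ultimately have "\<gamma> = \<gamma>'" using assms(8) gg(1,2) by blast
      then have "\<gamma> u0 = \<gamma> (l u0)" using gg(3) by (metis comp_apply)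
      then have "u0 = l u0" using inj gg(1) by (meson injD)
      then show False using Pl(4) u0 by blast
    qed
    have G2: "\<Gamma>2 \<subseteq> G"
    proof -
      have "\<forall>\<gamma>\<in>\<Gamma>. \<gamma> \<circ> l \<in> G" using G_comp[OF sub Pl(3)] GG by blast
      then show ?thesis unfolding \<Gamma>2_def using GG by blast
    qed
    have base: "\<exists>\<gamma>\<in>\<Gamma>. \<eta> = \<gamma> \<or> \<eta> = \<gamma> \<circ> l" if e: "\<eta> \<in> \<Gamma>2" for \<eta>
      using e unfolding \<Gamma>2_def by blast
    have sub2: "\<eta> ` P \<subseteq> \<gamma> ` C" if "\<eta> = \<gamma> \<or> \<eta> = \<gamma> \<circ> l" for \<eta> \<gamma>
      using that PC lPC by (auto simp: image_comp[symmetric])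
    have dj2: "DJ \<Gamma>2 P"
      unfolding DJ_def
    proof (intro ballI impI)
      fix \<eta>1 \<eta>2 assume e1: "\<eta>1 \<in> \<Gamma>2" and e2: "\<eta>2 \<in> \<Gamma>2" and ne: "\<eta>1 ` P \<inter> \<eta>2 ` P \<noteq> {}"
      obtain \<gamma>1 where g1: "\<gamma>1 \<in> \<Gamma>" "\<eta>1 = \<gamma>1 \<or> \<eta>1 = \<gamma>1 \<circ> l" using base[OF e1] by blast
      obtain \<gamma>2 where g2: "\<gamma>2 \<in> \<Gamma>" "\<eta>2 = \<gamma>2 \<or> \<eta>2 = \<gamma>2 \<circ> l" using base[OF e2] by blast
      have "\<gamma>1 ` C \<inter> \<gamma>2 ` C \<noteq> {}" using ne sub2[OF g1(2)] sub2[OF g2(2)] by blast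
      then have geq: "\<gamma>1 = \<gamma>2" using assms(8) g1(1) g2(1) by blast
      obtain u v where uv: "u \<in> P" "v \<in> P" "\<eta>1 u = \<eta>2 v" using ne by blast
      have ig: "inj \<gamma>1" using inj g1(1) by blast
      have mixed: False if m: "\<eta>1 = \<gamma>1" "\<eta>2 = \<gamma>1 \<circ> l" for dummy :: bool
      proof -
        have "\<gamma>1 u = \<gamma>1 (l v)" using uv(3) m by simp
        then have "u = l v" using ig by (meson injD)
        then show False using Pl(4) uv(1,2) by blast
      qed
      have mixed2: False if m: "\<eta>1 = \<gamma>1 \<circ> l" "\<eta>2 = \<gamma>1" for dummy :: bool
      proof -
        have "\<gamma>1 (l u) = \<gamma>1 v" using uv(3) m by simp
        then have "l u = v" using ig by (meson injD)
        then show False using Pl(4) uv(1,2) by blast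
      qed
      show "\<eta>1 = \<eta>2" using g1(2) g2(2) geq mixed mixed2 by blast
    qed
    have "Phi \<Gamma>2 P (tlift \<Gamma> l g) \<in> G"
      unfolding \<Gamma>2_def
      by (rule tl_G[OF cs sub vig af bl d G2[unfolded \<Gamma>2_def] Pl(1,2) dj2[unfolded \<Gamma>2_def] fin perm])
    moreover have "\<delta> = Phi \<Gamma>2 P (tlift \<Gamma> l g)"
    proof (rule ext)
      fix q
      have inj2: "\<forall>\<eta>\<in>\<Gamma>2. inj \<eta>" using G_inj[OF sub G2] .
      show "\<delta> q = Phi \<Gamma>2 P (tlift \<Gamma> l g) q"
      proof (cases "\<exists>\<eta>\<in>\<Gamma>2. q \<in> \<eta> ` P")
        case True
        then obtain \<eta> u where eu: "\<eta> \<in> \<Gamma>2" "u \<in> P" "q = \<eta> u" by blast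
        obtain \<gamma> where g: "\<gamma> \<in> \<Gamma>" "\<eta> = \<gamma> \<or> \<eta> = \<gamma> \<circ> l" using base[OF eu(1)] by blast
        have ie: "inj \<eta>" using inj2 eu(1) by blast
        have Ph: "Phi \<Gamma>2 P (tlift \<Gamma> l g) q = tlift \<Gamma> l g \<eta> u" using Phi_in2[OF dj2 eu(1,2) ie] eu(3) by simp
        show ?thesis
        proof (cases "\<eta> = \<gamma>")
          case True
          have "tlift \<Gamma> l g \<eta> = g \<gamma>" using tl_in g(1) True by simp
          moreover have "\<delta> q = g \<gamma> u"
          proof -
            have "u \<in> C" using PC eu(2) by blast
            then show ?thesis using din[OF g(1)] eu(3) True by simp
          qed
          ultimately show ?thesis using Ph by simp
        next
          case False
          then have el: "\<eta> = \<gamma> \<circ> l" using g(2) by blast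
          have nG: "\<gamma> \<circ> l \<notin> \<Gamma>" using d g(1) by blast
          have "tlift \<Gamma> l g \<eta> = g \<gamma> \<circ> l" using tl_rc[OF bl g(1) nG, of g] el by simp
          moreover have "\<delta> q = g \<gamma> (l u)"
          proof -
            have "l u \<in> C" using lPC eu(2) by blast
            then show ?thesis using din[OF g(1)] eu(3) el by simp
          qed
          ultimately show ?thesis using Ph by simp
        qed
      next
        case False
        have nC: "\<not> (\<exists>\<gamma>\<in>\<Gamma>. q \<in> \<gamma> ` C)"
        proof
          assume "\<exists>\<gamma>\<in>\<Gamma>. q \<in> \<gamma> ` C"
          then obtain \<gamma> c where gc: "\<gamma> \<in> \<Gamma>" "c \<in> C" "q = \<gamma> c" by blast
          show False
          proof (cases "c \<in> P")
            case True
            then have "q \<in> \<gamma> ` P" using gc(3) by blast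
            moreover have "\<gamma> \<in> \<Gamma>2" unfolding \<Gamma>2_def using gc(1) by blast
            ultimately show False using False by blast
          next
            case F2: False
            then obtain u where u: "u \<in> P" "c = l u" using gc(2) Pl(5) by blast
            have "q = (\<gamma> \<circ> l) u" using gc(3) u(2) by simp
            then have "q \<in> (\<gamma> \<circ> l) ` P" using u(1) by blast
            moreover have "\<gamma> \<circ> l \<in> \<Gamma>2" unfolding \<Gamma>2_def using gc(1) by blast
            ultimately show False using False by blast
          qed
        qed
        show ?thesis using dout[OF nC] Phi_out[OF False] by simp
      qed
    qed
    ultimately show ?thesis by simp
  qed
qed


end
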